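(* Let $\mathbb{S}=(\mathsf{S},\mu,\eta)$ be a Cartesian $k$-differential monad on a Cartesian $k$-differential category $\mathbb{X}$ with differential combinator $\mathsf{D}$. Then: (i) The Kleisli category $\mathsf{KL}(\mathbb{S})$, with the Cartesian left $k$-linear structure given by: terminal object and products of objects as in $\mathbb{X}$, projections $\llbracket\pi_j\rrbracket=\eta_{A_j}\circ\pi_j$, pairing $\llbracket\langle f_1,\dots,f_n\rangle\rrbracket=\omega^{-1}_{B_1,\dots,B_n}\circ\langle\llbracket f_1\rrbracket,\dots,\llbracket f_n\rrbracket\rangle$, and $k$-module structure on $\mathsf{KL}(\mathbb{S})(A,B)=\mathbb{X}(A,\mathsf{S}(B))$ inherited from $\mathbb{X}$, is a Cartesian $k$-differential category with differential combinator $\mathsf{D}_\mathbb{S}$ defined on a Kleisli map $\llbracket f\rrbracket:A\to\mathsf{S}(B)$ by $\llbracket\mathsf{D}_\mathbb{S}[f]\rrbracket:=\mathsf{D}[\llbracket f\rrbracket]:A\times A\to\mathsf{S}(B)$. (ii) A map $f$ of $\mathsf{KL}(\mathbb{S})$ is $\mathsf{D}_\mathbb{S}$-linear if and only if $\llbracket f\rrbracket$ is $\mathsf{D}$-linear in $\mathbb{X}$. (iii) $\mathsf{L}_\mathbb{S}:\mathbb{X}\to\mathsf{KL}(\mathbb{S})$ is a strict Cartesian $k$-differential functor and $\mathsf{R}_\mathbb{S}:\mathsf{KL}(\mathbb{S})\to\mathbb{X}$ is a strong Cartesian $k$-differential functor.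
   Context: Fix a commutative semiring $k$. A left $k$-linear category is a category $\mathbb{X}$ in which each hom-set $\mathbb{X}(A,B)$ is a $k$-module (scalar multiplication $r\cdot f$, addition $+$, zero $0$) such that precomposition is $k$-linear: $(r\cdot f+s\cdot g)\circ x=r\cdot(f\circ x)+s\cdot(g\circ x)$. A map $f$ is $k$-linear if $f\circ(r\cdot x+s\cdot y)=r\cdot(f\circ x)+s\cdot(f\circ y)$ for all suitable $x,y$ and $r,s\in k$. A Cartesian left $k$-linear category is a left $k$-linear category with finite products (terminal object $\ast$, projections $\pi_j:A_1\times\cdots\times A_n\to A_j$, pairing $\langle-,\dots,-\rangle$) in which all projections are $k$-linear. A Cartesian $k$-differential category is a Cartesian left $k$-linear category equipped with a differential combinator $\mathsf{D}$ assigning to each $f:A\to B$ a map $\mathsf{D}[f]:A\times A\to B$ such that: [CD.1] $\mathsf{D}[r\cdot f+s\cdot g]=r\cdot\mathsf{D}[f]+s\cdot\mathsf{D}[g]$; [CD.2] $\mathsf{D}[f]\circ\langle\pi_1,r\cdot\pi_2+s\cdot\pi_3\rangle=r\cdot(\mathsf{D}[f]\circ\langle\pi_1,\pi_2\rangle)+s\cdot(\mathsf{D}[f]\circ\langle\pi_1,\pi_3\rangle)$ (as maps $A\times A\times A\to B$); [CD.3] $\mathsf{D}[1_A]=\pi_2$ and, for $\pi_j:A_1\times\cdots\times A_n\to A_j$, $\mathsf{D}[\pi_j]=\pi_{n+j}$; [CD.4] $\mathsf{D}[\langle f_1,\dots,f_n\rangle]=\langle\mathsf{D}[f_1],\dots,\mathsf{D}[f_n]\rangle$;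 [CD.5] $\mathsf{D}[g\circ f]=\mathsf{D}[g]\circ\langle f\circ\pi_1,\mathsf{D}[f]\rangle$; [CD.6] $\mathsf{D}[\mathsf{D}[f]]\circ\langle\pi_1,0,0,\pi_2\rangle=\mathsf{D}[f]$; [CD.7] $\mathsf{D}[\mathsf{D}[f]]\circ\langle\pi_1,\pi_2,\pi_3,\pi_4\rangle=\mathsf{D}[\mathsf{D}[f]]\circ\langle\pi_1,\pi_3,\pi_2,\pi_4\rangle$ (identifying $(A\times A)\times(A\times A)$ with $A\times A\times A\times A$). A map $f$ is $\mathsf{D}$-linear if $\mathsf{D}[f]=f\circ\pi_2$. For Cartesian left $k$-linear categories $\mathbb{X},\mathbb{Y}$, a strong Cartesian $k$-linear functor is a functor $\mathsf{F}:\mathbb{X}\to\mathbb{Y}$ such that $\mathsf{F}(\ast)\to\ast$ is an isomorphism, the canonical maps $\omega_{A_1,\dots,A_n}=\langle\mathsf{F}(\pi_1),\dots,\mathsf{F}(\pi_n)\rangle:\mathsf{F}(A_1\times\cdots\times A_n)\to\mathsf{F}(A_1)\times\cdots\times\mathsf{F}(A_n)$ are isomorphisms, and $\mathsf{F}(r\cdot f+s\cdot g)=r\cdot\mathsf{F}(f)+s\cdot\mathsf{F}(g)$. It is strict if moreover $\omega$ is the identity. For Cartesian $k$-differential categories, a strong Cartesian $k$-differential functor is a strong Cartesian $k$-linear functor with $\mathsf{D}[\mathsf{F}(f)]=\mathsf{F}(\mathsf{D}[f])\circ\omega^{-1}_{A,A}$ for all $f:A\to B$; a strict Cartesian $k$-differential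 functor is a strict Cartesian $k$-linear functor with $\mathsf{D}[\mathsf{F}(f)]=\mathsf{F}(\mathsf{D}[f])$. A Cartesian $k$-differential monad on a Cartesian $k$-differential category $\mathbb{X}$ is a monad $\mathbb{S}=(\mathsf{S},\mu,\eta)$ on $\mathbb{X}$ such that $\mathsf{S}$ is a strong Cartesian $k$-differential functor and every $\eta_A$ and $\mu_A$ is $\mathsf{D}$-linear. Kleisli category notation: $\mathsf{KL}(\mathbb{S})$ has the objects of $\mathbb{X}$ and a map $f:A\to B$ in it is a map $\llbracket f\rrbracket:A\to\mathsf{S}(B)$ in $\mathbb{X}$; identities are $\llbracket 1_A\rrbracket=\eta_A$ and composition is $\llbracket g\circ f\rrbracket=\mu_C\circ\mathsf{S}(\llbracket g\rrbracket)\circ\llbracket f\rrbracket$. The functor $\mathsf{L}_\mathbb{S}:\mathbb{X}\to\mathsf{KL}(\mathbb{S})$ is identity on objects with $\llbracket\mathsf{L}_\mathbb{S}(f)\rrbracket=\eta_B\circ f$; the functor $\mathsf{R}_\mathbb{S}:\mathsf{KL}(\mathbb{S})\to\mathbb{X}$ is $\mathsf{R}_\mathbb{S}(A)=\mathsf{S}(A)$, $\mathsf{R}_\mathbb{S}(f)=\mu_B\circ\mathsf{S}(\llbracket f\rrbracket)$. *)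

theory Defs
  imports Main
begin

text \<open>A category is given by a set of objects, hom-sets, identities and a composition
  that is annotated with the objects involved (Cmp A B C g f = g o f for f : A -> B,
  g : B -> C).  The k-module structure on hom-sets is Smul, Add, Zro (Zro A B is the zero
  of the hom-set A -> B).  Finite products are indexed by lists of objects: Prd As is the
  product of the list As (Prd [] is the terminal object), Proj As j is the j-th projection
  (0-indexed) and Tup C As fs is the pairing of fs, a list of maps C -> As!j.\<close>

record ('o, 'm, 'k) cdstr =
  Ob   :: "'o set"
  Hom  :: "'o \<Rightarrow> 'o \<Rightarrow> 'm set"
  Idm  :: "'o \<Rightarrow> 'm"
  Cmp  :: "'o \<Rightarrow> 'o \<Rightarrow> 'o \<Rightarrow> 'm \<Rightarrow> 'm \<Rightarrow> 'm"
  Smul :: "'k \<Rightarrow> 'm \<Rightarrow> 'm"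
  Add  :: "'m \<Rightarrow> 'm \<Rightarrow> 'm"
  Zro  :: "'o \<Rightarrow> 'o \<Rightarrow> 'm"
  Prd  :: "'o list \<Rightarrow> 'o"
  Proj :: "'o list \<Rightarrow> nat \<Rightarrow> 'm"
  Tup  :: "'o \<Rightarrow> 'o list \<Rightarrow> 'm list \<Rightarrow> 'm"
  Dif  :: "'o \<Rightarrow> 'o \<Rightarrow> 'm \<Rightarrow> 'm"

definition is_category :: "('o, 'm, 'k) cdstr \<Rightarrow> bool" where
  "is_category X \<longleftrightarrow>
     (\<forall>A\<in>Ob X. Idm X A \<in> Hom X A A) \<and>
     (\<forall>A\<in>Ob X. \<forall>B\<in>Ob X. \<forall>C\<in>Ob X. \<forall>f g.
        f \<in> Hom X A B \<longrightarrow> g \<in> Hom X B C \<longrightarrow> Cmp X A B C g f \<in> Hom X A C) \<and>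
     (\<forall>A\<in>Ob X. \<forall>B\<in>Ob X. \<forall>f. f \<in> Hom X A B \<longrightarrow>
        Cmp X A A B f (Idm X A) = f \<and> Cmp X A B B (Idm X B) f = f) \<and>
     (\<forall>A\<in>Ob X. \<forall>B\<in>Ob X. \<forall>C\<in>Ob X. \<forall>E\<in>Ob X. \<forall>f g h.
        f \<in> Hom X A B \<longrightarrow> g \<in> Hom X B C \<longrightarrow> h \<in> Hom X C E \<longrightarrow>
        Cmp X A C E h (Cmp X A B C g f) = Cmp X A B E (Cmp X B C E h g) f)"

definition is_left_klinear :: "('o, 'm, 'k::comm_semiring_1) cdstr \<Rightarrow> bool" where
  "is_left_klinear X \<longleftrightarrow> is_category X \<and>
     (\<forall>A\<in>Ob X. \<forall>B\<in>Ob X.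
        Zro X A B \<in> Hom X A B \<and>
        (\<forall>f\<in>Hom X A B. \<forall>g\<in>Hom X A B. Add X f g \<in> Hom X A B) \<and>
        (\<forall>r. \<forall>f\<in>Hom X A B. Smul X r f \<in> Hom X A B) \<and>
        (\<forall>f\<in>Hom X A B. \<forall>g\<in>Hom X A B. \<forall>h\<in>Hom X A B.
            Add X (Add X f g) h = Add X f (Add X g h)) \<and>
        (\<forall>f\<in>Hom X A B. \<forall>g\<in>Hom X A B. Add X f g = Add X g f) \<and>
        (\<forall>f\<in>Hom X A B. Add X f (Zro X A B) = f) \<and>
        (\<forall>r. \<forall>f\<in>Hom X A B. \<forall>g\<in>Hom X A B.
            Smul X r (Add X f g) = Add X (Smul X r f) (Smul X r g)) \<and>
        (\<forall>r s. \<forall>f\<in>Hom X A B. Smul X (r + s) f = Add X (Smul X r f) (Smul X s f)) \<and>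
        (\<forall>r s. \<forall>f\<in>Hom X A B. Smul X (r * s) f = Smul X r (Smul X s f)) \<and>
        (\<forall>f\<in>Hom X A B. Smul X 1 f = f) \<and>
        (\<forall>f\<in>Hom X A B. Smul X 0 f = Zro X A B) \<and>
        (\<forall>r. Smul X r (Zro X A B) = Zro X A B)) \<and>
     (\<forall>A\<in>Ob X. \<forall>B\<in>Ob X. \<forall>C\<in>Ob X. \<forall>f g x r s.
        f \<in> Hom X B C \<longrightarrow> g \<in> Hom X B C \<longrightarrow> x \<in> Hom X A B \<longrightarrow>
        Cmp X A B C (Add X (Smul X r f) (Smul X s g)) x =
        Add X (Smul X r (Cmp X A B C f x)) (Smul X s (Cmp X A B C g x)))"

definition is_klinear_map :: "('o, 'm, 'k::comm_semiring_1) cdstr \<Rightarrow> 'o \<Rightarrow> 'o \<Rightarrow> 'm \<Rightarrow> bool" where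
  "is_klinear_map X A B f \<longleftrightarrow>
     (\<forall>C\<in>Ob X. \<forall>x y r s. x \<in> Hom X C A \<longrightarrow> y \<in> Hom X C A \<longrightarrow>
        Cmp X C A B f (Add X (Smul X r x) (Smul X s y)) =
        Add X (Smul X r (Cmp X C A B f x)) (Smul X s (Cmp X C A B f y)))"

definition has_finite_products :: "('o, 'm, 'k) cdstr \<Rightarrow> bool" where
  "has_finite_products X \<longleftrightarrow>
     (\<forall>As. set As \<subseteq> Ob X \<longrightarrow>
        Prd X As \<in> Ob X \<and>
        (\<forall>j < length As. Proj X As j \<in> Hom X (Prd X As) (As ! j)) \<and>
        (\<forall>C\<in>Ob X. \<forall>fs. length fs = length As \<longrightarrow>
            (\<forall>j < length As. fs ! j \<in> Hom X C (As ! j)) \<longrightarrow>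
            Tup X C As fs \<in> Hom X C (Prd X As) \<and>
            (\<forall>j < length As. Cmp X C (Prd X As) (As ! j) (Proj X As j) (Tup X C As fs) = fs ! j)) \<and>
        (\<forall>C\<in>Ob X. \<forall>g. g \<in> Hom X C (Prd X As) \<longrightarrow>
            Tup X C As (map (\<lambda>j. Cmp X C (Prd X As) (As ! j) (Proj X As j) g) [0..<length As]) = g))"

definition is_cartesian_left_klinear :: "('o, 'm, 'k::comm_semiring_1) cdstr \<Rightarrow> bool" where
  "is_cartesian_left_klinear X \<longleftrightarrow> is_left_klinear X \<and> has_finite_products X \<and>
     (\<forall>As. set As \<subseteq> Ob X \<longrightarrow>
        (\<forall>j < length As. is_klinear_map X (Prd X As) (As ! j) (Proj X As j)))"

definition is_cartesian_kdiff :: "('o, 'm, 'k::comm_semiring_1) cdstr \<Rightarrow> bool" where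
  "is_cartesian_kdiff X \<longleftrightarrow> is_cartesian_left_klinear X \<and>
     (\<forall>A\<in>Ob X. \<forall>B\<in>Ob X. \<forall>f. f \<in> Hom X A B \<longrightarrow>
        Dif X A B f \<in> Hom X (Prd X [A, A]) B) \<and>
     \<comment> \<open>CD.1\<close>
     (\<forall>A\<in>Ob X. \<forall>B\<in>Ob X. \<forall>f g r s. f \<in> Hom X A B \<longrightarrow> g \<in> Hom X A B \<longrightarrow>
        Dif X A B (Add X (Smul X r f) (Smul X s g)) =
        Add X (Smul X r (Dif X A B f)) (Smul X s (Dif X A B g))) \<and>
     \<comment> \<open>CD.2\<close>
     (\<forall>A\<in>Ob X. \<forall>B\<in>Ob X. \<forall>f r s. f \<in> Hom X A B \<longrightarrow>
        (let P3 = Prd X [A, A, A]; P2 = Prd X [A, A]; p = Proj X [A, A, A] in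
         Cmp X P3 P2 B (Dif X A B f)
           (Tup X P3 [A, A] [p 0, Add X (Smul X r (p 1)) (Smul X s (p 2))]) =
         Add X (Smul X r (Cmp X P3 P2 B (Dif X A B f) (Tup X P3 [A, A] [p 0, p 1])))
               (Smul X s (Cmp X P3 P2 B (Dif X A B f) (Tup X P3 [A, A] [p 0, p 2]))))) \<and>
     \<comment> \<open>CD.3\<close>
     (\<forall>A\<in>Ob X. Dif X A A (Idm X A) = Proj X [A, A] 1) \<and>
     (\<forall>As. set As \<subseteq> Ob X \<longrightarrow> (\<forall>j < length As.
        (let P = Prd X As in
         Dif X P (As ! j) (Proj X As j) =
         Cmp X (Prd X [P, P]) P (As ! j) (Proj X As j) (Proj X [P, P] 1)))) \<and>
     \<comment> \<open>CD.4\<close>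
     (\<forall>A\<in>Ob X. \<forall>Bs fs. set Bs \<subseteq> Ob X \<longrightarrow> length fs = length Bs \<longrightarrow>
        (\<forall>j < length Bs. fs ! j \<in> Hom X A (Bs ! j)) \<longrightarrow>
        Dif X A (Prd X Bs) (Tup X A Bs fs) =
        Tup X (Prd X [A, A]) Bs (map (\<lambda>j. Dif X A (Bs ! j) (fs ! j)) [0..<length Bs])) \<and>
     \<comment> \<open>CD.5\<close>
     (\<forall>A\<in>Ob X. \<forall>B\<in>Ob X. \<forall>C\<in>Ob X. \<forall>f g. f \<in> Hom X A B \<longrightarrow> g \<in> Hom X B C \<longrightarrow>
        Dif X A C (Cmp X A B C g f) =
        Cmp X (Prd X [A, A]) (Prd X [B, B]) C (Dif X B C g)
          (Tup X (Prd X [A, A]) [B, B]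
             [Cmp X (Prd X [A, A]) A B f (Proj X [A, A] 0), Dif X A B f])) \<and>
     \<comment> \<open>CD.6\<close>
     (\<forall>A\<in>Ob X. \<forall>B\<in>Ob X. \<forall>f. f \<in> Hom X A B \<longrightarrow>
        (let P2 = Prd X [A, A] in
         Cmp X P2 (Prd X [P2, P2]) B (Dif X P2 B (Dif X A B f))
           (Tup X P2 [P2, P2]
              [Tup X P2 [A, A] [Proj X [A, A] 0, Zro X P2 A],
               Tup X P2 [A, A] [Zro X P2 A, Proj X [A, A] 1]]) =
         Dif X A B f)) \<and>
     \<comment> \<open>CD.7\<close>
     (\<forall>A\<in>Ob X. \<forall>B\<in>Ob X. \<forall>f. f \<in> Hom X A B \<longrightarrow>
        (let P2 = Prd X [A, A]; P4 = Prd X [A, A, A, A]; q = Proj X [A, A, A, A];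
             DDf = Dif X P2 B (Dif X A B f) in
         Cmp X P4 (Prd X [P2, P2]) B DDf
           (Tup X P4 [P2, P2] [Tup X P4 [A, A] [q 0, q 1], Tup X P4 [A, A] [q 2, q 3]]) =
         Cmp X P4 (Prd X [P2, P2]) B DDf
           (Tup X P4 [P2, P2] [Tup X P4 [A, A] [q 0, q 2], Tup X P4 [A, A] [q 1, q 3]])))"

definition is_D_linear :: "('o, 'm, 'k) cdstr \<Rightarrow> 'o \<Rightarrow> 'o \<Rightarrow> 'm \<Rightarrow> bool" where
  "is_D_linear X A B f \<longleftrightarrow> Dif X A B f = Cmp X (Prd X [A, A]) A B f (Proj X [A, A] 1)"

definition is_functor :: "('o, 'm, 'k) cdstr \<Rightarrow> ('p, 'n, 'k) cdstr \<Rightarrow>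
    ('o \<Rightarrow> 'p) \<Rightarrow> ('o \<Rightarrow> 'o \<Rightarrow> 'm \<Rightarrow> 'n) \<Rightarrow> bool" where
  "is_functor X Y Fo Fm \<longleftrightarrow>
     (\<forall>A\<in>Ob X. Fo A \<in> Ob Y) \<and>
     (\<forall>A\<in>Ob X. \<forall>B\<in>Ob X. \<forall>f. f \<in> Hom X A B \<longrightarrow> Fm A B f \<in> Hom Y (Fo A) (Fo B)) \<and>
     (\<forall>A\<in>Ob X. Fm A A (Idm X A) = Idm Y (Fo A)) \<and>
     (\<forall>A\<in>Ob X. \<forall>B\<in>Ob X. \<forall>C\<in>Ob X. \<forall>f g. f \<in> Hom X A B \<longrightarrow> g \<in> Hom X B C \<longrightarrow>
        Fm A C (Cmp X A B C g f) = Cmp Y (Fo A) (Fo B) (Fo C) (Fm B C g) (Fm A B f))"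

definition is_iso :: "('o, 'm, 'k) cdstr \<Rightarrow> 'o \<Rightarrow> 'o \<Rightarrow> 'm \<Rightarrow> bool" where
  "is_iso X A B f \<longleftrightarrow> f \<in> Hom X A B \<and>
     (\<exists>g \<in> Hom X B A. Cmp X A B A g f = Idm X A \<and> Cmp X B A B f g = Idm X B)"

definition iso_inv :: "('o, 'm, 'k) cdstr \<Rightarrow> 'o \<Rightarrow> 'o \<Rightarrow> 'm \<Rightarrow> 'm" where
  "iso_inv X A B f = (SOME g. g \<in> Hom X B A \<and>
       Cmp X A B A g f = Idm X A \<and> Cmp X B A B f g = Idm X B)"

definition omega :: "('o, 'm, 'k) cdstr \<Rightarrow> ('p, 'n, 'k) cdstr \<Rightarrow>
    ('o \<Rightarrow> 'p) \<Rightarrow> ('o \<Rightarrow> 'o \<Rightarrow> 'm \<Rightarrow> 'n) \<Rightarrow> 'o list \<Rightarrow> 'n" where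
  "omega X Y Fo Fm As =
     Tup Y (Fo (Prd X As)) (map Fo As)
       (map (\<lambda>j. Fm (Prd X As) (As ! j) (Proj X As j)) [0..<length As])"

definition omega_inv :: "('o, 'm, 'k) cdstr \<Rightarrow> ('p, 'n, 'k) cdstr \<Rightarrow>
    ('o \<Rightarrow> 'p) \<Rightarrow> ('o \<Rightarrow> 'o \<Rightarrow> 'm \<Rightarrow> 'n) \<Rightarrow> 'o list \<Rightarrow> 'n" where
  "omega_inv X Y Fo Fm As =
     iso_inv Y (Fo (Prd X As)) (Prd Y (map Fo As)) (omega X Y Fo Fm As)"

text \<open>Strong Cartesian k-linear functor.  The condition that F(terminal) -> terminal is an
  isomorphism is the case As = [] (the terminal object is the empty product).\<close>

definition is_strong_cart_klinear_functor :: "('o, 'm, 'k::comm_semiring_1) cdstr \<Rightarrow>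
    ('p, 'n, 'k) cdstr \<Rightarrow> ('o \<Rightarrow> 'p) \<Rightarrow> ('o \<Rightarrow> 'o \<Rightarrow> 'm \<Rightarrow> 'n) \<Rightarrow> bool" where
  "is_strong_cart_klinear_functor X Y Fo Fm \<longleftrightarrow> is_functor X Y Fo Fm \<and>
     (\<forall>As. set As \<subseteq> Ob X \<longrightarrow>
        is_iso Y (Fo (Prd X As)) (Prd Y (map Fo As)) (omega X Y Fo Fm As)) \<and>
     (\<forall>A\<in>Ob X. \<forall>B\<in>Ob X. \<forall>f g r s. f \<in> Hom X A B \<longrightarrow> g \<in> Hom X A B \<longrightarrow>
        Fm A B (Add X (Smul X r f) (Smul X s g)) =
        Add Y (Smul Y r (Fm A B f)) (Smul Y s (Fm A B g)))"

definition is_strict_cart_klinear_functor :: "('o, 'm, 'k::comm_semiring_1) cdstr \<Rightarrow>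
    ('p, 'n, 'k) cdstr \<Rightarrow> ('o \<Rightarrow> 'p) \<Rightarrow> ('o \<Rightarrow> 'o \<Rightarrow> 'm \<Rightarrow> 'n) \<Rightarrow> bool" where
  "is_strict_cart_klinear_functor X Y Fo Fm \<longleftrightarrow> is_strong_cart_klinear_functor X Y Fo Fm \<and>
     (\<forall>As. set As \<subseteq> Ob X \<longrightarrow>
        Fo (Prd X As) = Prd Y (map Fo As) \<and>
        omega X Y Fo Fm As = Idm Y (Fo (Prd X As)))"

definition is_strong_cart_kdiff_functor :: "('o, 'm, 'k::comm_semiring_1) cdstr \<Rightarrow>
    ('p, 'n, 'k) cdstr \<Rightarrow> ('o \<Rightarrow> 'p) \<Rightarrow> ('o \<Rightarrow> 'o \<Rightarrow> 'm \<Rightarrow> 'n) \<Rightarrow> bool" where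
  "is_strong_cart_kdiff_functor X Y Fo Fm \<longleftrightarrow> is_strong_cart_klinear_functor X Y Fo Fm \<and>
     (\<forall>A\<in>Ob X. \<forall>B\<in>Ob X. \<forall>f. f \<in> Hom X A B \<longrightarrow>
        Dif Y (Fo A) (Fo B) (Fm A B f) =
        Cmp Y (Prd Y [Fo A, Fo A]) (Fo (Prd X [A, A])) (Fo B)
          (Fm (Prd X [A, A]) B (Dif X A B f)) (omega_inv X Y Fo Fm [A, A]))"

definition is_strict_cart_kdiff_functor :: "('o, 'm, 'k::comm_semiring_1) cdstr \<Rightarrow>
    ('p, 'n, 'k) cdstr \<Rightarrow> ('o \<Rightarrow> 'p) \<Rightarrow> ('o \<Rightarrow> 'o \<Rightarrow> 'm \<Rightarrow> 'n) \<Rightarrow> bool" where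
  "is_strict_cart_kdiff_functor X Y Fo Fm \<longleftrightarrow> is_strict_cart_klinear_functor X Y Fo Fm \<and>
     (\<forall>A\<in>Ob X. \<forall>B\<in>Ob X. \<forall>f. f \<in> Hom X A B \<longrightarrow>
        Dif Y (Fo A) (Fo B) (Fm A B f) = Fm (Prd X [A, A]) B (Dif X A B f))"

definition is_monad :: "('o, 'm, 'k) cdstr \<Rightarrow> ('o \<Rightarrow> 'o) \<Rightarrow> ('o \<Rightarrow> 'o \<Rightarrow> 'm \<Rightarrow> 'm) \<Rightarrow>
    ('o \<Rightarrow> 'm) \<Rightarrow> ('o \<Rightarrow> 'm) \<Rightarrow> bool" where
  "is_monad X So Sm mu eta \<longleftrightarrow> is_functor X X So Sm \<and>
     (\<forall>A\<in>Ob X. eta A \<in> Hom X A (So A) \<and> mu A \<in> Hom X (So (So A)) (So A)) \<and>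
     (\<forall>A\<in>Ob X. \<forall>B\<in>Ob X. \<forall>f. f \<in> Hom X A B \<longrightarrow>
        Cmp X A (So A) (So B) (Sm A B f) (eta A) = Cmp X A B (So B) (eta B) f \<and>
        Cmp X (So (So A)) (So (So B)) (So B) (mu B) (Sm (So A) (So B) (Sm A B f)) =
        Cmp X (So (So A)) (So A) (So B) (Sm A B f) (mu A)) \<and>
     (\<forall>A\<in>Ob X.
        Cmp X (So A) (So (So A)) (So A) (mu A) (eta (So A)) = Idm X (So A) \<and>
        Cmp X (So A) (So (So A)) (So A) (mu A) (Sm A (So A) (eta A)) = Idm X (So A) \<and>
        Cmp X (So (So (So A))) (So (So A)) (So A) (mu A) (mu (So A)) =
        Cmp X (So (So (So A))) (So (So A)) (So A) (mu A) (Sm (So (So A)) (So A) (mu A)))"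

definition is_cart_kdiff_monad :: "('o, 'm, 'k::comm_semiring_1) cdstr \<Rightarrow> ('o \<Rightarrow> 'o) \<Rightarrow>
    ('o \<Rightarrow> 'o \<Rightarrow> 'm \<Rightarrow> 'm) \<Rightarrow> ('o \<Rightarrow> 'm) \<Rightarrow> ('o \<Rightarrow> 'm) \<Rightarrow> bool" where
  "is_cart_kdiff_monad X So Sm mu eta \<longleftrightarrow> is_monad X So Sm mu eta \<and>
     is_strong_cart_kdiff_functor X X So Sm \<and>
     (\<forall>A\<in>Ob X. is_D_linear X A (So A) (eta A) \<and> is_D_linear X (So (So A)) (So A) (mu A))"

definition kleisli :: "('o, 'm, 'k) cdstr \<Rightarrow> ('o \<Rightarrow> 'o) \<Rightarrow> ('o \<Rightarrow> 'o \<Rightarrow> 'm \<Rightarrow> 'm) \<Rightarrow>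
    ('o \<Rightarrow> 'm) \<Rightarrow> ('o \<Rightarrow> 'm) \<Rightarrow> ('o, 'm, 'k) cdstr" where
  "kleisli X So Sm mu eta =
     \<lparr> Ob = Ob X,
       Hom = (\<lambda>A B. Hom X A (So B)),
       Idm = eta,
       Cmp = (\<lambda>A B C g f. Cmp X A (So B) (So C)
                (Cmp X (So B) (So (So C)) (So C) (mu C) (Sm B (So C) g)) f),
       Smul = Smul X,
       Add = Add X,
       Zro = (\<lambda>A B. Zro X A (So B)),
       Prd = Prd X,
       Proj = (\<lambda>As j. Cmp X (Prd X As) (As ! j) (So (As ! j)) (eta (As ! j)) (Proj X As j)),
       Tup = (\<lambda>C Bs fs. Cmp X C (Prd X (map So Bs)) (So (Prd X Bs))
                (omega_inv X X So Sm Bs) (Tup X C (map So Bs) fs)),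
       Dif = (\<lambda>A B f. Dif X A (So B) f) \<rparr>"

definition kleisli_L_ob :: "'o \<Rightarrow> 'o" where
  "kleisli_L_ob A = A"

definition kleisli_L :: "('o, 'm, 'k) cdstr \<Rightarrow> ('o \<Rightarrow> 'o) \<Rightarrow> ('o \<Rightarrow> 'm) \<Rightarrow>
    'o \<Rightarrow> 'o \<Rightarrow> 'm \<Rightarrow> 'm" where
  "kleisli_L X So eta A B f = Cmp X A B (So B) (eta B) f"

definition kleisli_R :: "('o, 'm, 'k) cdstr \<Rightarrow> ('o \<Rightarrow> 'o) \<Rightarrow> ('o \<Rightarrow> 'o \<Rightarrow> 'm \<Rightarrow> 'm) \<Rightarrow>
    ('o \<Rightarrow> 'm) \<Rightarrow> 'o \<Rightarrow> 'o \<Rightarrow> 'm \<Rightarrow> 'm" where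
  "kleisli_R X So Sm mu A B f = Cmp X (So A) (So (So B)) (So B) (mu B) (Sm A (So B) f)"

end

theory Submission
  imports Defs
begin

locale kdm =
  fixes X :: "('o, 'm, 'k::comm_semiring_1) cdstr"
    and So :: "'o \<Rightarrow> 'o" and Sm :: "'o \<Rightarrow> 'o \<Rightarrow> 'm \<Rightarrow> 'm"
    and mu eta :: "'o \<Rightarrow> 'm"
  assumes cd: "is_cartesian_kdiff X"
    and mon: "is_cart_kdiff_monad X So Sm mu eta"
begin

lemma clk: "is_cartesian_left_klinear X" using cd unfolding is_cartesian_kdiff_def by auto
lemma lk: "is_left_klinear X" using clk unfolding is_cartesian_left_klinear_def by auto
lemma cat: "is_category X" using lk unfolding is_left_klinear_def by auto
lemma fp: "has_finite_products X" using clk unfolding is_cartesian_left_klinear_def by auto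

lemma idm_hom: "A \<in> Ob X \<Longrightarrow> Idm X A \<in> Hom X A A"
  using cat unfolding is_category_def by auto
lemma cmp_hom: "A \<in> Ob X \<Longrightarrow> B \<in> Ob X \<Longrightarrow> C \<in> Ob X \<Longrightarrow> f \<in> Hom X A B \<Longrightarrow> g \<in> Hom X B C
  \<Longrightarrow> Cmp X A B C g f \<in> Hom X A C"
  using cat unfolding is_category_def by auto
lemma idr: "A \<in> Ob X \<Longrightarrow> B \<in> Ob X \<Longrightarrow> f \<in> Hom X A B \<Longrightarrow> Cmp X A A B f (Idm X A) = f"
  using cat unfolding is_category_def by auto
lemma idl: "A \<in> Ob X \<Longrightarrow> B \<in> Ob X \<Longrightarrow> f \<in> Hom X A B \<Longrightarrow> Cmp X A B B (Idm X B) f = f"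
  using cat unfolding is_category_def by auto
lemma assoc: "A \<in> Ob X \<Longrightarrow> B \<in> Ob X \<Longrightarrow> C \<in> Ob X \<Longrightarrow> E \<in> Ob X \<Longrightarrow>
  f \<in> Hom X A B \<Longrightarrow> g \<in> Hom X B C \<Longrightarrow> h \<in> Hom X C E \<Longrightarrow>
  Cmp X A C E h (Cmp X A B C g f) = Cmp X A B E (Cmp X B C E h g) f"
  using cat unfolding is_category_def by auto

lemma zro_hom: "A \<in> Ob X \<Longrightarrow> B \<in> Ob X \<Longrightarrow> Zro X A B \<in> Hom X A B"
  using lk unfolding is_left_klinear_def by auto
lemma add_hom: "A \<in> Ob X \<Longrightarrow> B \<in> Ob X \<Longrightarrow> f \<in> Hom X A B \<Longrightarrow> g \<in> Hom X A B \<Longrightarrow> Add X f g \<in> Hom X A B"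
  using lk unfolding is_left_klinear_def by auto
lemma smul_hom: "A \<in> Ob X \<Longrightarrow> B \<in> Ob X \<Longrightarrow> f \<in> Hom X A B \<Longrightarrow> Smul X r f \<in> Hom X A B"
  using lk unfolding is_left_klinear_def by auto
lemma smul0: "A \<in> Ob X \<Longrightarrow> B \<in> Ob X \<Longrightarrow> f \<in> Hom X A B \<Longrightarrow> Smul X 0 f = Zro X A B"
  using lk unfolding is_left_klinear_def by auto
lemma pre_lin: "A \<in> Ob X \<Longrightarrow> B \<in> Ob X \<Longrightarrow> C \<in> Ob X \<Longrightarrow> f \<in> Hom X B C \<Longrightarrow> g \<in> Hom X B C \<Longrightarrow> x \<in> Hom X A B \<Longrightarrow>
        Cmp X A B C (Add X (Smul X r f) (Smul X s g)) x =
        Add X (Smul X r (Cmp X A B C f x)) (Smul X s (Cmp X A B C g x))"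
  using lk unfolding is_left_klinear_def by auto

lemma prd_ob: "set As \<subseteq> Ob X \<Longrightarrow> Prd X As \<in> Ob X"
  using fp unfolding has_finite_products_def by auto
lemma proj_hom: "set As \<subseteq> Ob X \<Longrightarrow> j < length As \<Longrightarrow> Proj X As j \<in> Hom X (Prd X As) (As ! j)"
  using fp unfolding has_finite_products_def by auto
lemma tup_hom: "set As \<subseteq> Ob X \<Longrightarrow> C \<in> Ob X \<Longrightarrow> length fs = length As \<Longrightarrow>
   (\<And>j. j < length As \<Longrightarrow> fs ! j \<in> Hom X C (As ! j)) \<Longrightarrow> Tup X C As fs \<in> Hom X C (Prd X As)"
  using fp unfolding has_finite_products_def by auto
lemma proj_tup: "set As \<subseteq> Ob X \<Longrightarrow> C \<in> Ob X \<Longrightarrow> length fs = length As \<Longrightarrow>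
   (\<And>j. j < length As \<Longrightarrow> fs ! j \<in> Hom X C (As ! j)) \<Longrightarrow> j < length As \<Longrightarrow>
   Cmp X C (Prd X As) (As ! j) (Proj X As j) (Tup X C As fs) = fs ! j"
  using fp unfolding has_finite_products_def by auto
lemma tup_uniq: "set As \<subseteq> Ob X \<Longrightarrow> C \<in> Ob X \<Longrightarrow> g \<in> Hom X C (Prd X As) \<Longrightarrow>
   Tup X C As (map (\<lambda>j. Cmp X C (Prd X As) (As ! j) (Proj X As j) g) [0..<length As]) = g"
  using fp unfolding has_finite_products_def by auto
lemma proj_klin: "set As \<subseteq> Ob X \<Longrightarrow> j < length As \<Longrightarrow> is_klinear_map X (Prd X As) (As ! j) (Proj X As j)"
  using clk unfolding is_cartesian_left_klinear_def by auto

lemma dif_hom: "A \<in> Ob X \<Longrightarrow> B \<in> Ob X \<Longrightarrow> f \<in> Hom X A B \<Longrightarrow> Dif X A B f \<in> Hom X (Prd X [A, A]) B"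
  using cd unfolding is_cartesian_kdiff_def by auto
lemma cd1: "A \<in> Ob X \<Longrightarrow> B \<in> Ob X \<Longrightarrow> f \<in> Hom X A B \<Longrightarrow> g \<in> Hom X A B \<Longrightarrow>
        Dif X A B (Add X (Smul X r f) (Smul X s g)) =
        Add X (Smul X r (Dif X A B f)) (Smul X s (Dif X A B g))"
  using cd unfolding is_cartesian_kdiff_def by auto
lemma cd2: "A \<in> Ob X \<Longrightarrow> B \<in> Ob X \<Longrightarrow> f \<in> Hom X A B \<Longrightarrow>
         Cmp X (Prd X [A, A, A]) (Prd X [A, A]) B (Dif X A B f)
           (Tup X (Prd X [A, A, A]) [A, A] [Proj X [A, A, A] 0, Add X (Smul X r (Proj X [A, A, A] 1)) (Smul X s (Proj X [A, A, A] 2))]) =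
         Add X (Smul X r (Cmp X (Prd X [A, A, A]) (Prd X [A, A]) B (Dif X A B f) (Tup X (Prd X [A, A, A]) [A, A] [Proj X [A, A, A] 0, Proj X [A, A, A] 1])))
               (Smul X s (Cmp X (Prd X [A, A, A]) (Prd X [A, A]) B (Dif X A B f) (Tup X (Prd X [A, A, A]) [A, A] [Proj X [A, A, A] 0, Proj X [A, A, A] 2])))"
  using cd unfolding is_cartesian_kdiff_def Let_def by auto
lemma cd3a: "A \<in> Ob X \<Longrightarrow> Dif X A A (Idm X A) = Proj X [A, A] 1"
  using cd unfolding is_cartesian_kdiff_def by auto
lemma cd3b: "set As \<subseteq> Ob X \<Longrightarrow> j < length As \<Longrightarrow>
         Dif X (Prd X As) (As ! j) (Proj X As j) =
         Cmp X (Prd X [Prd X As, Prd X As]) (Prd X As) (As ! j) (Proj X As j) (Proj X [Prd X As, Prd X As] 1)"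
  using cd unfolding is_cartesian_kdiff_def Let_def by auto
lemma cd4: "A \<in> Ob X \<Longrightarrow> set Bs \<subseteq> Ob X \<Longrightarrow> length fs = length Bs \<Longrightarrow>
        (\<And>j. j < length Bs \<Longrightarrow> fs ! j \<in> Hom X A (Bs ! j)) \<Longrightarrow>
        Dif X A (Prd X Bs) (Tup X A Bs fs) =
        Tup X (Prd X [A, A]) Bs (map (\<lambda>j. Dif X A (Bs ! j) (fs ! j)) [0..<length Bs])"
  using cd unfolding is_cartesian_kdiff_def by auto
lemma cd5: "A \<in> Ob X \<Longrightarrow> B \<in> Ob X \<Longrightarrow> C \<in> Ob X \<Longrightarrow> f \<in> Hom X A B \<Longrightarrow> g \<in> Hom X B C \<Longrightarrow>
        Dif X A C (Cmp X A B C g f) =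
        Cmp X (Prd X [A, A]) (Prd X [B, B]) C (Dif X B C g)
          (Tup X (Prd X [A, A]) [B, B]
             [Cmp X (Prd X [A, A]) A B f (Proj X [A, A] 0), Dif X A B f])"
  using cd unfolding is_cartesian_kdiff_def by auto
lemma cd6: "A \<in> Ob X \<Longrightarrow> B \<in> Ob X \<Longrightarrow> f \<in> Hom X A B \<Longrightarrow>
         Cmp X (Prd X [A, A]) (Prd X [Prd X [A, A], Prd X [A, A]]) B (Dif X (Prd X [A, A]) B (Dif X A B f))
           (Tup X (Prd X [A, A]) [Prd X [A, A], Prd X [A, A]]
              [Tup X (Prd X [A, A]) [A, A] [Proj X [A, A] 0, Zro X (Prd X [A, A]) A],
               Tup X (Prd X [A, A]) [A, A] [Zro X (Prd X [A, A]) A, Proj X [A, A] 1]]) =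
         Dif X A B f"
  using cd unfolding is_cartesian_kdiff_def Let_def by auto
lemma cd7: "A \<in> Ob X \<Longrightarrow> B \<in> Ob X \<Longrightarrow> f \<in> Hom X A B \<Longrightarrow>
         Cmp X (Prd X [A, A, A, A]) (Prd X [Prd X [A, A], Prd X [A, A]]) B (Dif X (Prd X [A, A]) B (Dif X A B f))
           (Tup X (Prd X [A, A, A, A]) [Prd X [A, A], Prd X [A, A]] [Tup X (Prd X [A, A, A, A]) [A, A] [Proj X [A, A, A, A] 0, Proj X [A, A, A, A] 1], Tup X (Prd X [A, A, A, A]) [A, A] [Proj X [A, A, A, A] 2, Proj X [A, A, A, A] 3]]) =
         Cmp X (Prd X [A, A, A, A]) (Prd X [Prd X [A, A], Prd X [A, A]]) B (Dif X (Prd X [A, A]) B (Dif X A B f))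
           (Tup X (Prd X [A, A, A, A]) [Prd X [A, A], Prd X [A, A]] [Tup X (Prd X [A, A, A, A]) [A, A] [Proj X [A, A, A, A] 0, Proj X [A, A, A, A] 2], Tup X (Prd X [A, A, A, A]) [A, A] [Proj X [A, A, A, A] 1, Proj X [A, A, A, A] 3]])"
  using cd unfolding is_cartesian_kdiff_def Let_def by auto

lemma monad: "is_monad X So Sm mu eta" using mon unfolding is_cart_kdiff_monad_def by auto
lemma sfun: "is_functor X X So Sm" using monad unfolding is_monad_def by auto
lemma sdf: "is_strong_cart_kdiff_functor X X So Sm" using mon unfolding is_cart_kdiff_monad_def by auto
lemma slf: "is_strong_cart_klinear_functor X X So Sm" using sdf unfolding is_strong_cart_kdiff_functor_def by auto

lemma s_ob: "A \<in> Ob X \<Longrightarrow> So A \<in> Ob X" using sfun unfolding is_functor_def by auto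
lemma sm_hom: "A \<in> Ob X \<Longrightarrow> B \<in> Ob X \<Longrightarrow> f \<in> Hom X A B \<Longrightarrow> Sm A B f \<in> Hom X (So A) (So B)"
  using sfun unfolding is_functor_def by auto
lemma sm_id: "A \<in> Ob X \<Longrightarrow> Sm A A (Idm X A) = Idm X (So A)" using sfun unfolding is_functor_def by auto
lemma sm_cmp: "A \<in> Ob X \<Longrightarrow> B \<in> Ob X \<Longrightarrow> C \<in> Ob X \<Longrightarrow> f \<in> Hom X A B \<Longrightarrow> g \<in> Hom X B C \<Longrightarrow>
  Sm A C (Cmp X A B C g f) = Cmp X (So A) (So B) (So C) (Sm B C g) (Sm A B f)"
  using sfun unfolding is_functor_def by auto
lemma om_iso: "set As \<subseteq> Ob X \<Longrightarrow> is_iso X (So (Prd X As)) (Prd X (map So As)) (omega X X So Sm As)"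
  using slf unfolding is_strong_cart_klinear_functor_def by auto
lemma sm_lin: "A \<in> Ob X \<Longrightarrow> B \<in> Ob X \<Longrightarrow> f \<in> Hom X A B \<Longrightarrow> g \<in> Hom X A B \<Longrightarrow>
  Sm A B (Add X (Smul X r f) (Smul X s g)) = Add X (Smul X r (Sm A B f)) (Smul X s (Sm A B g))"
  using slf unfolding is_strong_cart_klinear_functor_def by auto
lemma sm_dif: "A \<in> Ob X \<Longrightarrow> B \<in> Ob X \<Longrightarrow> f \<in> Hom X A B \<Longrightarrow>
        Dif X (So A) (So B) (Sm A B f) =
        Cmp X (Prd X [So A, So A]) (So (Prd X [A, A])) (So B)
          (Sm (Prd X [A, A]) B (Dif X A B f)) (omega_inv X X So Sm [A, A])"
  using sdf unfolding is_strong_cart_kdiff_functor_def by auto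
lemma eta_hom: "A \<in> Ob X \<Longrightarrow> eta A \<in> Hom X A (So A)" using monad unfolding is_monad_def by auto
lemma mu_hom: "A \<in> Ob X \<Longrightarrow> mu A \<in> Hom X (So (So A)) (So A)" using monad unfolding is_monad_def by auto
lemma eta_nat: "A \<in> Ob X \<Longrightarrow> B \<in> Ob X \<Longrightarrow> f \<in> Hom X A B \<Longrightarrow>
        Cmp X A (So A) (So B) (Sm A B f) (eta A) = Cmp X A B (So B) (eta B) f"
  using monad unfolding is_monad_def by auto
lemma mu_nat: "A \<in> Ob X \<Longrightarrow> B \<in> Ob X \<Longrightarrow> f \<in> Hom X A B \<Longrightarrow>
        Cmp X (So (So A)) (So (So B)) (So B) (mu B) (Sm (So A) (So B) (Sm A B f)) =
        Cmp X (So (So A)) (So A) (So B) (Sm A B f) (mu A)"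
  using monad unfolding is_monad_def by auto
lemma mu_eta: "A \<in> Ob X \<Longrightarrow> Cmp X (So A) (So (So A)) (So A) (mu A) (eta (So A)) = Idm X (So A)"
  using monad unfolding is_monad_def by auto
lemma mu_seta: "A \<in> Ob X \<Longrightarrow> Cmp X (So A) (So (So A)) (So A) (mu A) (Sm A (So A) (eta A)) = Idm X (So A)"
  using monad unfolding is_monad_def by auto
lemma mu_assoc: "A \<in> Ob X \<Longrightarrow> Cmp X (So (So (So A))) (So (So A)) (So A) (mu A) (mu (So A)) =
        Cmp X (So (So (So A))) (So (So A)) (So A) (mu A) (Sm (So (So A)) (So A) (mu A))"
  using monad unfolding is_monad_def by auto
lemma eta_dlin: "A \<in> Ob X \<Longrightarrow> is_D_linear X A (So A) (eta A)" using mon unfolding is_cart_kdiff_monad_def by auto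
lemma mu_dlin: "A \<in> Ob X \<Longrightarrow> is_D_linear X (So (So A)) (So A) (mu A)" using mon unfolding is_cart_kdiff_monad_def by auto

lemmas homs = idm_hom cmp_hom zro_hom add_hom smul_hom prd_ob proj_hom dif_hom s_ob sm_hom eta_hom mu_hom

lemma tup_comp:
  assumes As: "set As \<subseteq> Ob X" and C: "C \<in> Ob X" and D: "D \<in> Ob X" and l: "length fs = length As"
    and fs: "\<And>j. j < length As \<Longrightarrow> fs ! j \<in> Hom X C (As ! j)" and g: "g \<in> Hom X D C"
  shows "Cmp X D C (Prd X As) (Tup X C As fs) g = Tup X D As (map (\<lambda>j. Cmp X D C (As ! j) (fs ! j) g) [0..<length As])"
proof -
  have Aj: "\<And>j. j < length As \<Longrightarrow> As ! j \<in> Ob X" using As by auto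
  have h: "Cmp X D C (Prd X As) (Tup X C As fs) g \<in> Hom X D (Prd X As)"
    by (rule cmp_hom[OF D C prd_ob[OF As] g tup_hom[OF As C l fs]])
  have "Cmp X D C (Prd X As) (Tup X C As fs) g =
     Tup X D As (map (\<lambda>j. Cmp X D (Prd X As) (As ! j) (Proj X As j) (Cmp X D C (Prd X As) (Tup X C As fs) g)) [0..<length As])"
    using tup_uniq[OF As D h] by simp
  also have "\<dots> = Tup X D As (map (\<lambda>j. Cmp X D C (As ! j) (fs ! j) g) [0..<length As])"
  proof (rule arg_cong[where f="Tup X D As"], rule map_cong[OF refl])
    fix j assume "j \<in> set [0..<length As]"
    hence j: "j < length As" by simp
    have "Cmp X D (Prd X As) (As ! j) (Proj X As j) (Cmp X D C (Prd X As) (Tup X C As fs) g)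
      = Cmp X D C (As ! j) (Cmp X C (Prd X As) (As ! j) (Proj X As j) (Tup X C As fs)) g"
      by (rule assoc[OF D C prd_ob[OF As] Aj[OF j] g tup_hom[OF As C l fs] proj_hom[OF As j]])
    also have "\<dots> = Cmp X D C (As ! j) (fs ! j) g" using proj_tup[OF As C l fs j] by simp
    finally show "Cmp X D (Prd X As) (As ! j) (Proj X As j) (Cmp X D C (Prd X As) (Tup X C As fs) g) = Cmp X D C (As ! j) (fs ! j) g" .
  qed
  finally show ?thesis .
qed

lemma tup_ext:
  assumes As: "set As \<subseteq> Ob X" and C: "C \<in> Ob X" and g: "g \<in> Hom X C (Prd X As)" and h: "h \<in> Hom X C (Prd X As)"
    and eq: "\<And>j. j < length As \<Longrightarrow> Cmp X C (Prd X As) (As ! j) (Proj X As j) g = Cmp X C (Prd X As) (As ! j) (Proj X As j) h"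
  shows "g = h"
proof -
  have "g = Tup X C As (map (\<lambda>j. Cmp X C (Prd X As) (As ! j) (Proj X As j) g) [0..<length As])"
    using tup_uniq[OF As C g] by simp
  also have "\<dots> = Tup X C As (map (\<lambda>j. Cmp X C (Prd X As) (As ! j) (Proj X As j) h) [0..<length As])"
    using eq by (intro arg_cong[where f="Tup X C As"] map_cong) auto
  also have "\<dots> = h" using tup_uniq[OF As C h] .
  finally show ?thesis .
qed

lemma args2: "f \<in> Hom X C A \<Longrightarrow> g \<in> Hom X C B \<Longrightarrow> j < length [A, B] \<Longrightarrow> [f, g] ! j \<in> Hom X C ([A, B] ! j)"
proof -
  assume "f \<in> Hom X C A" "g \<in> Hom X C B" "j < length [A, B]"
  moreover have "j = 0 \<or> j = 1" using \<open>j < length [A, B]\<close> by auto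
  ultimately show ?thesis by auto
qed
lemma args3: "f \<in> Hom X C A \<Longrightarrow> g \<in> Hom X C B \<Longrightarrow> h \<in> Hom X C E \<Longrightarrow> j < length [A, B, E] \<Longrightarrow> [f, g, h] ! j \<in> Hom X C ([A, B, E] ! j)"
proof -
  assume "f \<in> Hom X C A" "g \<in> Hom X C B" "h \<in> Hom X C E" "j < length [A, B, E]"
  moreover have "j = 0 \<or> j = 1 \<or> j = 2" using \<open>j < length [A, B, E]\<close> by auto
  ultimately show ?thesis by auto
qed
lemma tup2_hom: "A \<in> Ob X \<Longrightarrow> B \<in> Ob X \<Longrightarrow> C \<in> Ob X \<Longrightarrow> f \<in> Hom X C A \<Longrightarrow> g \<in> Hom X C B \<Longrightarrow>
  Tup X C [A, B] [f, g] \<in> Hom X C (Prd X [A, B])"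
  by (rule tup_hom) (auto intro: args2)
lemma proj_tup2: "A \<in> Ob X \<Longrightarrow> B \<in> Ob X \<Longrightarrow> C \<in> Ob X \<Longrightarrow> f \<in> Hom X C A \<Longrightarrow> g \<in> Hom X C B \<Longrightarrow>
  Cmp X C (Prd X [A, B]) A (Proj X [A, B] 0) (Tup X C [A, B] [f, g]) = f \<and>
  Cmp X C (Prd X [A, B]) B (Proj X [A, B] 1) (Tup X C [A, B] [f, g]) = g"
  using proj_tup[of "[A,B]" C "[f,g]" 0, OF _ _ _ args2] proj_tup[of "[A,B]" C "[f,g]" 1, OF _ _ _ args2]
  by auto
lemma tup2_comp: "A \<in> Ob X \<Longrightarrow> B \<in> Ob X \<Longrightarrow> C \<in> Ob X \<Longrightarrow> D \<in> Ob X \<Longrightarrow> f \<in> Hom X C A \<Longrightarrow> g \<in> Hom X C B \<Longrightarrow>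
  h \<in> Hom X D C \<Longrightarrow>
  Cmp X D C (Prd X [A, B]) (Tup X C [A, B] [f, g]) h = Tup X D [A, B] [Cmp X D C A f h, Cmp X D C B g h]"
  using tup_comp[of "[A,B]" C D "[f,g]" h, OF _ _ _ _ args2]
  by (auto simp: upt_rec)
lemma tup3_hom: "A \<in> Ob X \<Longrightarrow> B \<in> Ob X \<Longrightarrow> E \<in> Ob X \<Longrightarrow> C \<in> Ob X \<Longrightarrow> f \<in> Hom X C A \<Longrightarrow> g \<in> Hom X C B \<Longrightarrow> h \<in> Hom X C E \<Longrightarrow>
  Tup X C [A, B, E] [f, g, h] \<in> Hom X C (Prd X [A, B, E])"
  by (rule tup_hom) (auto intro: args3)
lemma proj_tup3: "A \<in> Ob X \<Longrightarrow> B \<in> Ob X \<Longrightarrow> E \<in> Ob X \<Longrightarrow> C \<in> Ob X \<Longrightarrow> f \<in> Hom X C A \<Longrightarrow> g \<in> Hom X C B \<Longrightarrow> h \<in> Hom X C E \<Longrightarrow>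
  Cmp X C (Prd X [A, B, E]) A (Proj X [A, B, E] 0) (Tup X C [A, B, E] [f, g, h]) = f \<and>
  Cmp X C (Prd X [A, B, E]) B (Proj X [A, B, E] 1) (Tup X C [A, B, E] [f, g, h]) = g \<and>
  Cmp X C (Prd X [A, B, E]) E (Proj X [A, B, E] 2) (Tup X C [A, B, E] [f, g, h]) = h"
  using proj_tup[of "[A,B,E]" C "[f,g,h]" 0, OF _ _ _ args3] proj_tup[of "[A,B,E]" C "[f,g,h]" 1, OF _ _ _ args3]
    proj_tup[of "[A,B,E]" C "[f,g,h]" 2, OF _ _ _ args3]
  by auto

lemma proj2_hom: "A \<in> Ob X \<Longrightarrow> B \<in> Ob X \<Longrightarrow> Proj X [A, B] 0 \<in> Hom X (Prd X [A, B]) A \<and> Proj X [A, B] 1 \<in> Hom X (Prd X [A, B]) B"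
  using proj_hom[of "[A,B]" 0] proj_hom[of "[A,B]" 1] by auto
lemma proj3_hom: "A \<in> Ob X \<Longrightarrow> B \<in> Ob X \<Longrightarrow> E \<in> Ob X \<Longrightarrow> Proj X [A, B, E] 0 \<in> Hom X (Prd X [A, B, E]) A \<and>
   Proj X [A, B, E] 1 \<in> Hom X (Prd X [A, B, E]) B \<and> Proj X [A, B, E] 2 \<in> Hom X (Prd X [A, B, E]) E"
  using proj_hom[of "[A,B,E]" 0] proj_hom[of "[A,B,E]" 1] proj_hom[of "[A,B,E]" 2] by auto
lemma ob2: "A \<in> Ob X \<Longrightarrow> B \<in> Ob X \<Longrightarrow> Prd X [A, B] \<in> Ob X" by (rule prd_ob) auto
lemma ob3: "A \<in> Ob X \<Longrightarrow> B \<in> Ob X \<Longrightarrow> E \<in> Ob X \<Longrightarrow> Prd X [A, B, E] \<in> Ob X" by (rule prd_ob) auto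

lemma dlin_app:
  assumes A: "A \<in> Ob X" and B: "B \<in> Ob X" and C: "C \<in> Ob X" and f: "f \<in> Hom X A B"
    and dl: "is_D_linear X A B f" and u: "u \<in> Hom X C A" and z: "z \<in> Hom X C A"
  shows "Cmp X C (Prd X [A, A]) B (Dif X A B f) (Tup X C [A, A] [u, z]) = Cmp X C A B f z"
proof -
  have P: "Prd X [A, A] \<in> Ob X" using ob2[OF A A] .
  have "Cmp X C (Prd X [A, A]) B (Dif X A B f) (Tup X C [A, A] [u, z])
      = Cmp X C (Prd X [A, A]) B (Cmp X (Prd X [A, A]) A B f (Proj X [A, A] 1)) (Tup X C [A, A] [u, z])"
    using dl unfolding is_D_linear_def by simp
  also have "\<dots> = Cmp X C A B f (Cmp X C (Prd X [A, A]) A (Proj X [A, A] 1) (Tup X C [A, A] [u, z]))"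
    using assoc[OF C P A B tup2_hom[OF A A C u z] conjunct2[OF proj2_hom[OF A A]] f] by simp
  also have "\<dots> = Cmp X C A B f z" using proj_tup2[OF A A C u z] by simp
  finally show ?thesis .
qed

lemma dlin_klin:
  assumes A: "A \<in> Ob X" and B: "B \<in> Ob X" and C: "C \<in> Ob X" and f: "f \<in> Hom X A B"
    and dl: "is_D_linear X A B f" and x: "x \<in> Hom X C A" and y: "y \<in> Hom X C A"
  shows "Cmp X C A B f (Add X (Smul X r x) (Smul X s y)) =
     Add X (Smul X r (Cmp X C A B f x)) (Smul X s (Cmp X C A B f y))"
proof -
  define P3 where "P3 = Prd X [A, A, A]"
  define P2 where "P2 = Prd X [A, A]"
  define p where "p = Proj X [A, A, A]"
  define t where "t = Tup X C [A, A, A] [x, x, y]"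
  have P3: "P3 \<in> Ob X" unfolding P3_def using ob3[OF A A A] .
  have P2: "P2 \<in> Ob X" unfolding P2_def using ob2[OF A A] .
  have p: "p 0 \<in> Hom X P3 A" "p 1 \<in> Hom X P3 A" "p 2 \<in> Hom X P3 A"
    unfolding p_def P3_def using proj3_hom[OF A A A] by auto
  have t: "t \<in> Hom X C P3" unfolding t_def P3_def by (rule tup3_hom[OF A A A C x x y])
  have pt: "Cmp X C P3 A (p 0) t = x" "Cmp X C P3 A (p 1) t = x" "Cmp X C P3 A (p 2) t = y"
    unfolding p_def t_def P3_def using proj_tup3[OF A A A C x x y] by auto
  have Df: "Dif X A B f \<in> Hom X P2 B" unfolding P2_def by (rule dif_hom[OF A B f])
  have lc: "Add X (Smul X r (p 1)) (Smul X s (p 2)) \<in> Hom X P3 A"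
    using p A P3 by (intro add_hom smul_hom) auto
  have T1: "Tup X P3 [A, A] [p 0, Add X (Smul X r (p 1)) (Smul X s (p 2))] \<in> Hom X P3 P2"
    unfolding P2_def by (rule tup2_hom[OF A A P3 p(1) lc])
  have Ta: "Tup X P3 [A, A] [p 0, p 1] \<in> Hom X P3 P2" unfolding P2_def by (rule tup2_hom[OF A A P3 p(1) p(2)])
  have Tb: "Tup X P3 [A, A] [p 0, p 2] \<in> Hom X P3 P2" unfolding P2_def by (rule tup2_hom[OF A A P3 p(1) p(3)])
  have DTa: "Cmp X P3 P2 B (Dif X A B f) (Tup X P3 [A, A] [p 0, p 1]) \<in> Hom X P3 B" by (rule cmp_hom[OF P3 P2 B Ta Df])
  have DTb: "Cmp X P3 P2 B (Dif X A B f) (Tup X P3 [A, A] [p 0, p 2]) \<in> Hom X P3 B" by (rule cmp_hom[OF P3 P2 B Tb Df])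
  have c2: "Cmp X P3 P2 B (Dif X A B f) (Tup X P3 [A, A] [p 0, Add X (Smul X r (p 1)) (Smul X s (p 2))]) =
     Add X (Smul X r (Cmp X P3 P2 B (Dif X A B f) (Tup X P3 [A, A] [p 0, p 1])))
           (Smul X s (Cmp X P3 P2 B (Dif X A B f) (Tup X P3 [A, A] [p 0, p 2])))"
    unfolding P3_def P2_def p_def using cd2[OF A B f] .
  have lct: "Cmp X C P3 A (Add X (Smul X r (p 1)) (Smul X s (p 2))) t = Add X (Smul X r x) (Smul X s y)"
    using pre_lin[OF C P3 A p(2) p(3) t] pt by simp
  have xy: "Add X (Smul X r x) (Smul X s y) \<in> Hom X C A" using x y A C by (intro add_hom smul_hom) auto
  have "Cmp X C P3 B (Cmp X P3 P2 B (Dif X A B f) (Tup X P3 [A, A] [p 0, Add X (Smul X r (p 1)) (Smul X s (p 2))])) t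
      = Cmp X C P2 B (Dif X A B f) (Cmp X C P3 P2 (Tup X P3 [A, A] [p 0, Add X (Smul X r (p 1)) (Smul X s (p 2))]) t)"
    using assoc[OF C P3 P2 B t T1 Df] by simp
  also have "\<dots> = Cmp X C P2 B (Dif X A B f) (Tup X C [A, A] [x, Add X (Smul X r x) (Smul X s y)])"
    unfolding P2_def using tup2_comp[OF A A P3 C p(1) lc t] pt lct by simp
  also have "\<dots> = Cmp X C A B f (Add X (Smul X r x) (Smul X s y))"
    unfolding P2_def by (rule dlin_app[OF A B C f dl x xy])
  finally have L: "Cmp X C P3 B (Cmp X P3 P2 B (Dif X A B f) (Tup X P3 [A, A] [p 0, Add X (Smul X r (p 1)) (Smul X s (p 2))])) t
      = Cmp X C A B f (Add X (Smul X r x) (Smul X s y))" .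
  have a: "Cmp X C P3 B (Cmp X P3 P2 B (Dif X A B f) (Tup X P3 [A, A] [p 0, p 1])) t = Cmp X C A B f x"
  proof -
    have "Cmp X C P3 B (Cmp X P3 P2 B (Dif X A B f) (Tup X P3 [A, A] [p 0, p 1])) t
       = Cmp X C P2 B (Dif X A B f) (Cmp X C P3 P2 (Tup X P3 [A, A] [p 0, p 1]) t)"
      using assoc[OF C P3 P2 B t Ta Df] by simp
    also have "\<dots> = Cmp X C P2 B (Dif X A B f) (Tup X C [A, A] [x, x])"
      unfolding P2_def using tup2_comp[OF A A P3 C p(1) p(2) t] pt by simp
    also have "\<dots> = Cmp X C A B f x" unfolding P2_def by (rule dlin_app[OF A B C f dl x x])
    finally show ?thesis .
  qed
  have b: "Cmp X C P3 B (Cmp X P3 P2 B (Dif X A B f) (Tup X P3 [A, A] [p 0, p 2])) t = Cmp X C A B f y"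
  proof -
    have "Cmp X C P3 B (Cmp X P3 P2 B (Dif X A B f) (Tup X P3 [A, A] [p 0, p 2])) t
       = Cmp X C P2 B (Dif X A B f) (Cmp X C P3 P2 (Tup X P3 [A, A] [p 0, p 2]) t)"
      using assoc[OF C P3 P2 B t Tb Df] by simp
    also have "\<dots> = Cmp X C P2 B (Dif X A B f) (Tup X C [A, A] [x, y])"
      unfolding P2_def using tup2_comp[OF A A P3 C p(1) p(3) t] pt by simp
    also have "\<dots> = Cmp X C A B f y" unfolding P2_def by (rule dlin_app[OF A B C f dl x y])
    finally show ?thesis .
  qed
  show ?thesis using L c2 pre_lin[OF C P3 B DTa DTb t] a b by simp
qed

lemma dlin_klinear_map: "A \<in> Ob X \<Longrightarrow> B \<in> Ob X \<Longrightarrow> f \<in> Hom X A B \<Longrightarrow> is_D_linear X A B f \<Longrightarrow> is_klinear_map X A B f"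
  unfolding is_klinear_map_def using dlin_klin by blast

lemma dlin_comp:
  assumes A: "A \<in> Ob X" and B: "B \<in> Ob X" and C: "C \<in> Ob X" and f: "f \<in> Hom X A B" and g: "g \<in> Hom X B C"
    and dl: "is_D_linear X B C g"
  shows "Dif X A C (Cmp X A B C g f) = Cmp X (Prd X [A, A]) B C g (Dif X A B f)"
proof -
  have P: "Prd X [A, A] \<in> Ob X" using ob2[OF A A] .
  have fp: "Cmp X (Prd X [A, A]) A B f (Proj X [A, A] 0) \<in> Hom X (Prd X [A, A]) B"
    using cmp_hom[OF P A B conjunct1[OF proj2_hom[OF A A]] f] .
  show ?thesis using cd5[OF A B C f g] dlin_app[OF B C P g dl fp dif_hom[OF A B f]] by simp
qed

lemma dlin_comp2:
  assumes A: "A \<in> Ob X" and B: "B \<in> Ob X" and C: "C \<in> Ob X" and f: "f \<in> Hom X A B" and g: "g \<in> Hom X B C"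
    and dlf: "is_D_linear X A B f" and dlg: "is_D_linear X B C g"
  shows "is_D_linear X A C (Cmp X A B C g f)"
proof -
  have P: "Prd X [A, A] \<in> Ob X" using ob2[OF A A] .
  show ?thesis unfolding is_D_linear_def
    using dlin_comp[OF A B C f g dlg] dlf[unfolded is_D_linear_def]
      assoc[OF P A B C conjunct2[OF proj2_hom[OF A A]] f g] by simp
qed

lemma iso_invD: "is_iso Y A B f \<Longrightarrow> iso_inv Y A B f \<in> Hom Y B A \<and>
   Cmp Y A B A (iso_inv Y A B f) f = Idm Y A \<and> Cmp Y B A B f (iso_inv Y A B f) = Idm Y B"
  unfolding is_iso_def iso_inv_def by (rule someI_ex) blast

lemma mapS: "set As \<subseteq> Ob X \<Longrightarrow> set (map So As) \<subseteq> Ob X" using s_ob by auto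

lemma om_props:
  assumes As: "set As \<subseteq> Ob X"
  shows "omega X X So Sm As \<in> Hom X (So (Prd X As)) (Prd X (map So As))"
    and "omega_inv X X So Sm As \<in> Hom X (Prd X (map So As)) (So (Prd X As))"
    and "Cmp X (So (Prd X As)) (Prd X (map So As)) (So (Prd X As)) (omega_inv X X So Sm As) (omega X X So Sm As) = Idm X (So (Prd X As))"
    and "Cmp X (Prd X (map So As)) (So (Prd X As)) (Prd X (map So As)) (omega X X So Sm As) (omega_inv X X So Sm As) = Idm X (Prd X (map So As))"
  using om_iso[OF As] iso_invD[OF om_iso[OF As]] unfolding omega_inv_def is_iso_def by auto

lemma om_tup: "omega X X So Sm As = Tup X (So (Prd X As)) (map So As) (map (\<lambda>j. Sm (Prd X As) (As ! j) (Proj X As j)) [0..<length As])"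
  unfolding omega_def ..

lemma sproj_hom: "set As \<subseteq> Ob X \<Longrightarrow> j < length As \<Longrightarrow> Sm (Prd X As) (As ! j) (Proj X As j) \<in> Hom X (So (Prd X As)) (So (As ! j))"
  by (rule sm_hom) (auto intro: proj_hom prd_ob)

lemma proj_om:
  assumes As: "set As \<subseteq> Ob X" and j: "j < length As"
  shows "Cmp X (So (Prd X As)) (Prd X (map So As)) (So (As ! j)) (Proj X (map So As) j) (omega X X So Sm As) = Sm (Prd X As) (As ! j) (Proj X As j)"
  using proj_tup[OF mapS[OF As] s_ob[OF prd_ob[OF As]], of "map (\<lambda>j. Sm (Prd X As) (As ! j) (Proj X As j)) [0..<length As]" j]
    As j sproj_hom[OF As] unfolding om_tup by auto

lemma sproj_omi:
  assumes As: "set As \<subseteq> Ob X" and j: "j < length As"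
  shows "Cmp X (Prd X (map So As)) (So (Prd X As)) (So (As ! j)) (Sm (Prd X As) (As ! j) (Proj X As j)) (omega_inv X X So Sm As) = Proj X (map So As) j"
proof -
  have Aj: "As ! j \<in> Ob X" using As j by auto
  have Q: "Prd X (map So As) \<in> Ob X" using prd_ob[OF mapS[OF As]] .
  have SP: "So (Prd X As) \<in> Ob X" using s_ob[OF prd_ob[OF As]] .
  have pj: "Proj X (map So As) j \<in> Hom X (Prd X (map So As)) (So (As ! j))"
    using proj_hom[OF mapS[OF As], of j] j by simp
  have "Cmp X (Prd X (map So As)) (So (Prd X As)) (So (As ! j)) (Sm (Prd X As) (As ! j) (Proj X As j)) (omega_inv X X So Sm As)
     = Cmp X (Prd X (map So As)) (So (Prd X As)) (So (As ! j)) (Cmp X (So (Prd X As)) (Prd X (map So As)) (So (As ! j)) (Proj X (map So As) j) (omega X X So Sm As)) (omega_inv X X So Sm As)"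
    using proj_om[OF As j] by simp
  also have "\<dots> = Cmp X (Prd X (map So As)) (Prd X (map So As)) (So (As ! j)) (Proj X (map So As) j) (Cmp X (Prd X (map So As)) (So (Prd X As)) (Prd X (map So As)) (omega X X So Sm As) (omega_inv X X So Sm As))"
    using assoc[OF Q SP Q s_ob[OF Aj] om_props(2)[OF As] om_props(1)[OF As] pj] by simp
  also have "\<dots> = Proj X (map So As) j" using om_props(4)[OF As] idr[OF Q s_ob[OF Aj] pj] by simp
  finally show ?thesis .
qed

lemma sproj_dlin:
  assumes As: "set As \<subseteq> Ob X" and j: "j < length As"
  shows "is_D_linear X (So (Prd X As)) (So (As ! j)) (Sm (Prd X As) (As ! j) (Proj X As j))"
proof -
  define P where "P = Prd X As"
  have P: "P \<in> Ob X" unfolding P_def using prd_ob[OF As] .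
  have Aj: "As ! j \<in> Ob X" using As j by auto
  have PP: "Prd X [P, P] \<in> Ob X" using ob2[OF P P] .
  have pj: "Proj X As j \<in> Hom X P (As ! j)" unfolding P_def using proj_hom[OF As j] .
  have p1: "Proj X [P, P] 1 \<in> Hom X (Prd X [P, P]) P" using proj2_hom[OF P P] by simp
  have SPP: "Prd X [So P, So P] \<in> Ob X" using ob2[OF s_ob[OF P] s_ob[OF P]] .
  have omi: "omega_inv X X So Sm [P, P] \<in> Hom X (Prd X [So P, So P]) (So (Prd X [P, P]))"
    using om_props(2)[of "[P,P]"] P by simp
  have so: "Cmp X (Prd X [So P, So P]) (So (Prd X [P, P])) (So P) (Sm (Prd X [P, P]) P (Proj X [P, P] 1)) (omega_inv X X So Sm [P, P]) = Proj X [So P, So P] 1"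
    using sproj_omi[of "[P,P]" 1] P by simp
  have "Dif X (So P) (So (As ! j)) (Sm P (As ! j) (Proj X As j))
     = Cmp X (Prd X [So P, So P]) (So (Prd X [P, P])) (So (As ! j)) (Sm (Prd X [P, P]) (As ! j) (Dif X P (As ! j) (Proj X As j))) (omega_inv X X So Sm [P, P])"
    using sm_dif[OF P Aj pj] .
  also have "\<dots> = Cmp X (Prd X [So P, So P]) (So (Prd X [P, P])) (So (As ! j)) (Cmp X (So (Prd X [P, P])) (So P) (So (As ! j)) (Sm P (As ! j) (Proj X As j)) (Sm (Prd X [P, P]) P (Proj X [P, P] 1))) (omega_inv X X So Sm [P, P])"
    using cd3b[OF As j] sm_cmp[OF PP P Aj p1 pj] unfolding P_def by simp
  also have "\<dots> = Cmp X (Prd X [So P, So P]) (So P) (So (As ! j)) (Sm P (As ! j) (Proj X As j)) (Cmp X (Prd X [So P, So P]) (So (Prd X [P, P])) (So P) (Sm (Prd X [P, P]) P (Proj X [P, P] 1)) (omega_inv X X So Sm [P, P]))"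
    using assoc[OF SPP s_ob[OF PP] s_ob[OF P] s_ob[OF Aj] omi sm_hom[OF PP P p1] sm_hom[OF P Aj pj]] by simp
  also have "\<dots> = Cmp X (Prd X [So P, So P]) (So P) (So (As ! j)) (Sm P (As ! j) (Proj X As j)) (Proj X [So P, So P] 1)"
    using so by simp
  finally show ?thesis unfolding is_D_linear_def P_def .
qed

lemma om_dlin:
  assumes As: "set As \<subseteq> Ob X"
  shows "is_D_linear X (So (Prd X As)) (Prd X (map So As)) (omega X X So Sm As)"
proof -
  define SP where "SP = So (Prd X As)"
  have SP: "SP \<in> Ob X" unfolding SP_def using s_ob[OF prd_ob[OF As]] .
  have SPP: "Prd X [SP, SP] \<in> Ob X" using ob2[OF SP SP] .
  have p1: "Proj X [SP, SP] 1 \<in> Hom X (Prd X [SP, SP]) SP" using proj2_hom[OF SP SP] by simp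
  define gs where "gs = map (\<lambda>j. Sm (Prd X As) (As ! j) (Proj X As j)) [0..<length As]"
  have gs: "\<And>j. j < length (map So As) \<Longrightarrow> gs ! j \<in> Hom X SP (map So As ! j)"
    unfolding gs_def SP_def using sproj_hom[OF As] by auto
  have lg: "length gs = length (map So As)" unfolding gs_def by simp
  have om: "omega X X So Sm As = Tup X SP (map So As) gs" unfolding om_tup gs_def SP_def ..
  have "Dif X SP (Prd X (map So As)) (omega X X So Sm As) =
     Tup X (Prd X [SP, SP]) (map So As) (map (\<lambda>j. Dif X SP (map So As ! j) (gs ! j)) [0..<length (map So As)])"
    unfolding om by (rule cd4[OF SP mapS[OF As] lg gs])
  also have "\<dots> = Tup X (Prd X [SP, SP]) (map So As) (map (\<lambda>j. Cmp X (Prd X [SP, SP]) SP (map So As ! j) (gs ! j) (Proj X [SP, SP] 1)) [0..<length (map So As)])"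
  proof (intro arg_cong[where f="Tup X (Prd X [SP, SP]) (map So As)"] map_cong refl)
    fix j assume "j \<in> set [0..<length (map So As)]"
    hence j: "j < length As" by simp
    show "Dif X SP (map So As ! j) (gs ! j) = Cmp X (Prd X [SP, SP]) SP (map So As ! j) (gs ! j) (Proj X [SP, SP] 1)"
      using sproj_dlin[OF As j] j unfolding gs_def SP_def is_D_linear_def by simp
  qed
  also have "\<dots> = Cmp X (Prd X [SP, SP]) SP (Prd X (map So As)) (omega X X So Sm As) (Proj X [SP, SP] 1)"
    unfolding om by (rule tup_comp[OF mapS[OF As] SP SPP lg gs p1, symmetric])
  finally show ?thesis unfolding is_D_linear_def SP_def .
qed

lemma omi_dlin:
  assumes As: "set As \<subseteq> Ob X"
  shows "is_D_linear X (Prd X (map So As)) (So (Prd X As)) (omega_inv X X So Sm As)"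
proof -
  define SP where "SP = So (Prd X As)"
  define Q where "Q = Prd X (map So As)"
  define w where "w = omega X X So Sm As"
  define v where "v = omega_inv X X So Sm As"
  have SP: "SP \<in> Ob X" unfolding SP_def using s_ob[OF prd_ob[OF As]] .
  have Q: "Q \<in> Ob X" unfolding Q_def using prd_ob[OF mapS[OF As]] .
  have QQ: "Prd X [Q, Q] \<in> Ob X" using ob2[OF Q Q] .
  have w: "w \<in> Hom X SP Q" and v: "v \<in> Hom X Q SP"
    and vw: "Cmp X SP Q SP v w = Idm X SP" and wv: "Cmp X Q SP Q w v = Idm X Q"
    using om_props[OF As] unfolding SP_def Q_def w_def v_def by auto
  have dw: "is_D_linear X SP Q w" using om_dlin[OF As] unfolding SP_def Q_def w_def .
  have Dv: "Dif X Q SP v \<in> Hom X (Prd X [Q, Q]) SP" using dif_hom[OF Q SP v] .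
  have p1: "Proj X [Q, Q] 1 \<in> Hom X (Prd X [Q, Q]) Q" using proj2_hom[OF Q Q] by simp
  have e: "Cmp X (Prd X [Q, Q]) SP Q w (Dif X Q SP v) = Proj X [Q, Q] 1"
    using dlin_comp[OF Q SP Q v w dw] wv cd3a[OF Q] by simp
  have "Dif X Q SP v = Cmp X (Prd X [Q, Q]) SP SP (Idm X SP) (Dif X Q SP v)" using idl[OF QQ SP Dv] by simp
  also have "\<dots> = Cmp X (Prd X [Q, Q]) SP SP (Cmp X SP Q SP v w) (Dif X Q SP v)" using vw by simp
  also have "\<dots> = Cmp X (Prd X [Q, Q]) Q SP v (Cmp X (Prd X [Q, Q]) SP Q w (Dif X Q SP v))"
    using assoc[OF QQ SP Q SP Dv w v] by simp
  also have "\<dots> = Cmp X (Prd X [Q, Q]) Q SP v (Proj X [Q, Q] 1)" using e by simp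
  finally show ?thesis unfolding is_D_linear_def SP_def Q_def v_def .
qed

abbreviation bind :: "'o \<Rightarrow> 'o \<Rightarrow> 'm \<Rightarrow> 'm" where
  "bind B C g \<equiv> Cmp X (So B) (So (So C)) (So C) (mu C) (Sm B (So C) g)"

lemma bind_hom: "B \<in> Ob X \<Longrightarrow> C \<in> Ob X \<Longrightarrow> g \<in> Hom X B (So C) \<Longrightarrow> bind B C g \<in> Hom X (So B) (So C)"
  by (rule cmp_hom[OF s_ob s_ob[OF s_ob] s_ob sm_hom[OF _ s_ob] mu_hom]) auto

lemma bind_eta:
  assumes B: "B \<in> Ob X" and C: "C \<in> Ob X" and g: "g \<in> Hom X B (So C)"
  shows "Cmp X B (So B) (So C) (bind B C g) (eta B) = g"
proof -
  have SC: "So C \<in> Ob X" "So (So C) \<in> Ob X" using s_ob C by auto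
  have "Cmp X B (So B) (So C) (bind B C g) (eta B) = Cmp X B (So (So C)) (So C) (mu C) (Cmp X B (So B) (So (So C)) (Sm B (So C) g) (eta B))"
    using assoc[OF B s_ob[OF B] SC(2) SC(1) eta_hom[OF B] sm_hom[OF B SC(1) g] mu_hom[OF C]] by simp
  also have "\<dots> = Cmp X B (So (So C)) (So C) (mu C) (Cmp X B (So C) (So (So C)) (eta (So C)) g)"
    using eta_nat[OF B SC(1) g] by simp
  also have "\<dots> = Cmp X B (So C) (So C) (Cmp X (So C) (So (So C)) (So C) (mu C) (eta (So C))) g"
    using assoc[OF B SC(1) SC(2) SC(1) g eta_hom[OF SC(1)] mu_hom[OF C]] .
  also have "\<dots> = g" using mu_eta[OF C] idl[OF B SC(1) g] by simp
  finally show ?thesis .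
qed

lemma bind_L:
  assumes A: "A \<in> Ob X" and B: "B \<in> Ob X" and h: "h \<in> Hom X A B"
  shows "bind A B (Cmp X A B (So B) (eta B) h) = Sm A B h"
proof -
  have SB: "So B \<in> Ob X" "So (So B) \<in> Ob X" "So A \<in> Ob X" using s_ob A B by auto
  have "bind A B (Cmp X A B (So B) (eta B) h) = Cmp X (So A) (So (So B)) (So B) (mu B) (Cmp X (So A) (So B) (So (So B)) (Sm B (So B) (eta B)) (Sm A B h))"
    using sm_cmp[OF A B SB(1) h eta_hom[OF B]] by simp
  also have "\<dots> = Cmp X (So A) (So B) (So B) (Cmp X (So B) (So (So B)) (So B) (mu B) (Sm B (So B) (eta B))) (Sm A B h)"
    using assoc[OF SB(3) SB(1) SB(2) SB(1) sm_hom[OF A B h] sm_hom[OF B SB(1) eta_hom[OF B]] mu_hom[OF B]] .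
  also have "\<dots> = Sm A B h" using mu_seta[OF B] idl[OF SB(3) SB(1) sm_hom[OF A B h]] by simp
  finally show ?thesis .
qed

lemma cmpK_L:
  assumes A: "A \<in> Ob X" and B: "B \<in> Ob X" and C: "C \<in> Ob X" and g: "g \<in> Hom X B (So C)" and h: "h \<in> Hom X A B"
  shows "Cmp X A (So B) (So C) (bind B C g) (Cmp X A B (So B) (eta B) h) = Cmp X A B (So C) g h"
  using assoc[OF A B s_ob[OF B] s_ob[OF C] h eta_hom[OF B] bind_hom[OF B C g]] bind_eta[OF B C g] by simp

lemma bind_bind:
  assumes B: "B \<in> Ob X" and C: "C \<in> Ob X" and E: "E \<in> Ob X" and g: "g \<in> Hom X B (So C)" and h: "h \<in> Hom X C (So E)"
  shows "Cmp X (So B) (So C) (So E) (bind C E h) (bind B C g) = bind B E (Cmp X B (So C) (So E) (bind C E h) g)"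
proof -
  have O: "So B \<in> Ob X" "So C \<in> Ob X" "So E \<in> Ob X" "So (So C) \<in> Ob X" "So (So E) \<in> Ob X" "So (So (So E)) \<in> Ob X"
    using s_ob B C E by auto
  have Sh: "Sm C (So E) h \<in> Hom X (So C) (So (So E))" using sm_hom[OF C O(3) h] .
  have SgH: "Sm B (So C) g \<in> Hom X (So B) (So (So C))" using sm_hom[OF B O(2) g] .
  have SSh: "Sm (So C) (So (So E)) (Sm C (So E) h) \<in> Hom X (So (So C)) (So (So (So E)))" using sm_hom[OF O(2) O(5) Sh] .
  have Smu: "Sm (So (So E)) (So E) (mu E) \<in> Hom X (So (So (So E))) (So (So E))" using sm_hom[OF O(5) O(3) mu_hom[OF E]] .
  note mE = mu_hom[OF E] and mSE = mu_hom[OF O(3)] and mC = mu_hom[OF C]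
  have "Cmp X (So (So C)) (So (So E)) (So E) (mu E) (Cmp X (So (So C)) (So (So (So E))) (So (So E)) (Sm (So (So E)) (So E) (mu E)) (Sm (So C) (So (So E)) (Sm C (So E) h)))
     = Cmp X (So (So C)) (So (So (So E))) (So E) (Cmp X (So (So (So E))) (So (So E)) (So E) (mu E) (Sm (So (So E)) (So E) (mu E))) (Sm (So C) (So (So E)) (Sm C (So E) h))"
    using assoc[OF O(4) O(6) O(5) O(3) SSh Smu mE] .
  also have "\<dots> = Cmp X (So (So C)) (So (So (So E))) (So E) (Cmp X (So (So (So E))) (So (So E)) (So E) (mu E) (mu (So E))) (Sm (So C) (So (So E)) (Sm C (So E) h))"
    using mu_assoc[OF E] by simp
  also have "\<dots> = Cmp X (So (So C)) (So (So E)) (So E) (mu E) (Cmp X (So (So C)) (So (So (So E))) (So (So E)) (mu (So E)) (Sm (So C) (So (So E)) (Sm C (So E) h)))"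
    using assoc[OF O(4) O(6) O(5) O(3) SSh mSE mE] by simp
  also have "\<dots> = Cmp X (So (So C)) (So (So E)) (So E) (mu E) (Cmp X (So (So C)) (So C) (So (So E)) (Sm C (So E) h) (mu C))"
    using mu_nat[OF C O(3) h] by simp
  also have "\<dots> = Cmp X (So (So C)) (So C) (So E) (bind C E h) (mu C)"
    using assoc[OF O(4) O(2) O(5) O(3) mC Sh mE] .
  finally have k: "Cmp X (So (So C)) (So (So E)) (So E) (mu E) (Cmp X (So (So C)) (So (So (So E))) (So (So E)) (Sm (So (So E)) (So E) (mu E)) (Sm (So C) (So (So E)) (Sm C (So E) h)))
     = Cmp X (So (So C)) (So C) (So E) (bind C E h) (mu C)" .
  have "bind B E (Cmp X B (So C) (So E) (bind C E h) g)
     = Cmp X (So B) (So (So E)) (So E) (mu E) (Cmp X (So B) (So (So C)) (So (So E)) (Cmp X (So (So C)) (So (So (So E))) (So (So E)) (Sm (So (So E)) (So E) (mu E)) (Sm (So C) (So (So E)) (Sm C (So E) h))) (Sm B (So C) g))"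
    using sm_cmp[OF B O(2) O(3) g bind_hom[OF C E h]] sm_cmp[OF O(2) O(5) O(3) Sh mE] by simp
  also have "\<dots>
     = Cmp X (So B) (So (So C)) (So E) (Cmp X (So (So C)) (So (So E)) (So E) (mu E) (Cmp X (So (So C)) (So (So (So E))) (So (So E)) (Sm (So (So E)) (So E) (mu E)) (Sm (So C) (So (So E)) (Sm C (So E) h)))) (Sm B (So C) g)"
    using assoc[OF O(1) O(4) O(5) O(3) SgH cmp_hom[OF O(4) O(6) O(5) SSh Smu] mE] .
  also have "\<dots> = Cmp X (So B) (So (So C)) (So E) (Cmp X (So (So C)) (So C) (So E) (bind C E h) (mu C)) (Sm B (So C) g)" using k by simp
  also have "\<dots> = Cmp X (So B) (So C) (So E) (bind C E h) (bind B C g)"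
    using assoc[OF O(1) O(4) O(2) O(3) SgH mC bind_hom[OF C E h]] by simp
  finally show ?thesis by simp
qed

lemma eta_lin: "A \<in> Ob X \<Longrightarrow> C \<in> Ob X \<Longrightarrow> x \<in> Hom X C A \<Longrightarrow> y \<in> Hom X C A \<Longrightarrow>
  Cmp X C A (So A) (eta A) (Add X (Smul X r x) (Smul X s y)) =
     Add X (Smul X r (Cmp X C A (So A) (eta A) x)) (Smul X s (Cmp X C A (So A) (eta A) y))"
  by (rule dlin_klin[OF _ s_ob _ eta_hom eta_dlin]) auto
lemma mu_lin: "A \<in> Ob X \<Longrightarrow> C \<in> Ob X \<Longrightarrow> x \<in> Hom X C (So (So A)) \<Longrightarrow> y \<in> Hom X C (So (So A)) \<Longrightarrow>
  Cmp X C (So (So A)) (So A) (mu A) (Add X (Smul X r x) (Smul X s y)) =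
     Add X (Smul X r (Cmp X C (So (So A)) (So A) (mu A) x)) (Smul X s (Cmp X C (So (So A)) (So A) (mu A) y))"
  by (rule dlin_klin[OF s_ob[OF s_ob] s_ob _ mu_hom mu_dlin]) auto

lemma addZ: "A \<in> Ob X \<Longrightarrow> B \<in> Ob X \<Longrightarrow> Add X (Zro X A B) (Zro X A B) = Zro X A B"
  using lk zro_hom unfolding is_left_klinear_def by auto

lemma eta_zro:
  assumes A: "A \<in> Ob X" and C: "C \<in> Ob X"
  shows "Cmp X C A (So A) (eta A) (Zro X C A) = Zro X C (So A)"
proof -
  have Z: "Zro X C A \<in> Hom X C A" using zro_hom[OF C A] .
  have eZ: "Cmp X C A (So A) (eta A) (Zro X C A) \<in> Hom X C (So A)" using cmp_hom[OF C A s_ob[OF A] Z eta_hom[OF A]] .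
  have "Cmp X C A (So A) (eta A) (Add X (Smul X 0 (Zro X C A)) (Smul X 0 (Zro X C A))) =
     Add X (Smul X 0 (Cmp X C A (So A) (eta A) (Zro X C A))) (Smul X 0 (Cmp X C A (So A) (eta A) (Zro X C A)))"
    by (rule eta_lin[OF A C Z Z])
  thus ?thesis using smul0[OF C A Z] smul0[OF C s_ob[OF A] eZ] addZ[OF C A] addZ[OF C s_ob[OF A]] by simp
qed

lemma bind_lin:
  assumes B: "B \<in> Ob X" and C: "C \<in> Ob X" and f: "f \<in> Hom X B (So C)" and g: "g \<in> Hom X B (So C)"
  shows "bind B C (Add X (Smul X r f) (Smul X s g)) = Add X (Smul X r (bind B C f)) (Smul X s (bind B C g))"
  using sm_lin[OF B s_ob[OF C] f g] mu_lin[OF C s_ob[OF B] sm_hom[OF B s_ob[OF C] f] sm_hom[OF B s_ob[OF C] g]] by simp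

lemma tupK_L:
  assumes Bs: "set Bs \<subseteq> Ob X" and C: "C \<in> Ob X" and l: "length fs = length Bs"
    and fs: "\<And>j. j < length Bs \<Longrightarrow> fs ! j \<in> Hom X C (Bs ! j)"
    and lg: "length gs = length Bs"
    and gs: "\<And>j. j < length Bs \<Longrightarrow> gs ! j = Cmp X C (Bs ! j) (So (Bs ! j)) (eta (Bs ! j)) (fs ! j)"
  shows "Cmp X C (Prd X (map So Bs)) (So (Prd X Bs)) (omega_inv X X So Sm Bs) (Tup X C (map So Bs) gs)
     = Cmp X C (Prd X Bs) (So (Prd X Bs)) (eta (Prd X Bs)) (Tup X C Bs fs)"
proof -
  define P where "P = Prd X Bs"
  define Q where "Q = Prd X (map So Bs)"
  have P: "P \<in> Ob X" unfolding P_def using prd_ob[OF Bs] .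
  have Q: "Q \<in> Ob X" unfolding Q_def using prd_ob[OF mapS[OF Bs]] .
  have SP: "So P \<in> Ob X" using s_ob[OF P] .
  have T: "Tup X C Bs fs \<in> Hom X C P" unfolding P_def using tup_hom[OF Bs C l fs] .
  have eT: "Cmp X C P (So P) (eta P) (Tup X C Bs fs) \<in> Hom X C (So P)" using cmp_hom[OF C P SP T eta_hom[OF P]] .
  have w: "omega X X So Sm Bs \<in> Hom X (So P) Q" and v: "omega_inv X X So Sm Bs \<in> Hom X Q (So P)"
    and vw: "Cmp X (So P) Q (So P) (omega_inv X X So Sm Bs) (omega X X So Sm Bs) = Idm X (So P)"
    using om_props[OF Bs] unfolding P_def Q_def by auto
  have gsh: "\<And>j. j < length (map So Bs) \<Longrightarrow> gs ! j \<in> Hom X C (map So Bs ! j)"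
    using gs fs Bs C by (auto intro!: cmp_hom eta_hom s_ob)
  have TG: "Tup X C (map So Bs) gs \<in> Hom X C Q" unfolding Q_def using tup_hom[OF mapS[OF Bs] C _ gsh] lg by simp
  have weT: "Cmp X C (So P) Q (omega X X So Sm Bs) (Cmp X C P (So P) (eta P) (Tup X C Bs fs)) \<in> Hom X C Q"
    using cmp_hom[OF C SP Q eT w] .
  have key: "Tup X C (map So Bs) gs = Cmp X C (So P) Q (omega X X So Sm Bs) (Cmp X C P (So P) (eta P) (Tup X C Bs fs))"
  proof (rule tup_ext[OF mapS[OF Bs] C, folded Q_def, OF TG weT])
    fix j assume j': "j < length (map So Bs)"
    hence j: "j < length Bs" by simp
    have Bj: "Bs ! j \<in> Ob X" using Bs j by auto
    have pj: "Proj X Bs j \<in> Hom X P (Bs ! j)" unfolding P_def using proj_hom[OF Bs j] .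
    have pj': "Proj X (map So Bs) j \<in> Hom X Q (So (Bs ! j))" unfolding Q_def using proj_hom[OF mapS[OF Bs] j'] j by simp
    have "Cmp X C Q (So (Bs ! j)) (Proj X (map So Bs) j) (Cmp X C (So P) Q (omega X X So Sm Bs) (Cmp X C P (So P) (eta P) (Tup X C Bs fs)))
       = Cmp X C (So P) (So (Bs ! j)) (Cmp X (So P) Q (So (Bs ! j)) (Proj X (map So Bs) j) (omega X X So Sm Bs)) (Cmp X C P (So P) (eta P) (Tup X C Bs fs))"
      using assoc[OF C SP Q s_ob[OF Bj] eT w pj'] .
    also have "\<dots> = Cmp X C (So P) (So (Bs ! j)) (Sm P (Bs ! j) (Proj X Bs j)) (Cmp X C P (So P) (eta P) (Tup X C Bs fs))"
      using proj_om[OF Bs j] unfolding P_def Q_def by simp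
    also have "\<dots> = Cmp X C P (So (Bs ! j)) (Cmp X P (So P) (So (Bs ! j)) (Sm P (Bs ! j) (Proj X Bs j)) (eta P)) (Tup X C Bs fs)"
      using assoc[OF C P SP s_ob[OF Bj] T eta_hom[OF P] sm_hom[OF P Bj pj]] .
    also have "\<dots> = Cmp X C P (So (Bs ! j)) (Cmp X P (Bs ! j) (So (Bs ! j)) (eta (Bs ! j)) (Proj X Bs j)) (Tup X C Bs fs)"
      using eta_nat[OF P Bj pj] by simp
    also have "\<dots> = Cmp X C (Bs ! j) (So (Bs ! j)) (eta (Bs ! j)) (Cmp X C P (Bs ! j) (Proj X Bs j) (Tup X C Bs fs))"
      using assoc[OF C P Bj s_ob[OF Bj] T pj eta_hom[OF Bj]] by simp
    also have "\<dots> = gs ! j" using proj_tup[OF Bs C l fs j] gs[OF j] unfolding P_def by simp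
    also have "\<dots> = Cmp X C Q (So (Bs ! j)) (Proj X (map So Bs) j) (Tup X C (map So Bs) gs)"
      using proj_tup[OF mapS[OF Bs] C _ gsh j'] lg j unfolding Q_def by simp
    finally show "Cmp X C Q (map So Bs ! j) (Proj X (map So Bs) j) (Tup X C (map So Bs) gs) =
         Cmp X C Q (map So Bs ! j) (Proj X (map So Bs) j) (Cmp X C (So P) Q (omega X X So Sm Bs) (Cmp X C P (So P) (eta P) (Tup X C Bs fs)))"
      using j by simp
  qed
  have "Cmp X C Q (So P) (omega_inv X X So Sm Bs) (Tup X C (map So Bs) gs)
      = Cmp X C (So P) (So P) (Cmp X (So P) Q (So P) (omega_inv X X So Sm Bs) (omega X X So Sm Bs)) (Cmp X C P (So P) (eta P) (Tup X C Bs fs))"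
    using key assoc[OF C SP Q SP eT w v] by simp
  also have "\<dots> = Cmp X C P (So P) (eta P) (Tup X C Bs fs)" using vw idl[OF C SP eT] by simp
  finally show ?thesis unfolding P_def Q_def .
qed

abbreviation K where "K \<equiv> kleisli X So Sm mu eta"

lemma K_sel: "Ob K = Ob X" "Hom K = (\<lambda>A B. Hom X A (So B))" "Idm K = eta"
  "Cmp K = (\<lambda>A B C g f. Cmp X A (So B) (So C) (bind B C g) f)"
  "Smul K = Smul X" "Add K = Add X" "Zro K = (\<lambda>A B. Zro X A (So B))" "Prd K = Prd X"
  "Proj K = (\<lambda>As j. Cmp X (Prd X As) (As ! j) (So (As ! j)) (eta (As ! j)) (Proj X As j))"
  "Tup K = (\<lambda>C Bs fs. Cmp X C (Prd X (map So Bs)) (So (Prd X Bs)) (omega_inv X X So Sm Bs) (Tup X C (map So Bs) fs))"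
  "Dif K = (\<lambda>A B f. Dif X A (So B) f)"
  by (simp_all add: kleisli_def)

lemma K_assoc:
  assumes A: "A \<in> Ob X" and B: "B \<in> Ob X" and C: "C \<in> Ob X" and E: "E \<in> Ob X"
    and f: "f \<in> Hom X A (So B)" and g: "g \<in> Hom X B (So C)" and h: "h \<in> Hom X C (So E)"
  shows "Cmp X A (So C) (So E) (bind C E h) (Cmp X A (So B) (So C) (bind B C g) f) =
    Cmp X A (So B) (So E) (bind B E (Cmp X B (So C) (So E) (bind C E h) g)) f"
  using assoc[OF A s_ob[OF B] s_ob[OF C] s_ob[OF E] f bind_hom[OF B C g] bind_hom[OF C E h]]
    bind_bind[OF B C E g h] by simp

lemma K_cat: "is_category K"
  unfolding is_category_def K_sel
proof (intro conjI)
  show "\<forall>A\<in>Ob X. eta A \<in> Hom X A (So A)" using eta_hom by blast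
  show "\<forall>A\<in>Ob X. \<forall>B\<in>Ob X. \<forall>C\<in>Ob X. \<forall>f g. f \<in> Hom X A (So B) \<longrightarrow> g \<in> Hom X B (So C) \<longrightarrow>
    Cmp X A (So B) (So C) (bind B C g) f \<in> Hom X A (So C)"
    using cmp_hom s_ob bind_hom by blast
  show "\<forall>A\<in>Ob X. \<forall>B\<in>Ob X. \<forall>f. f \<in> Hom X A (So B) \<longrightarrow>
        Cmp X A (So A) (So B) (bind A B f) (eta A) = f \<and> Cmp X A (So B) (So B) (bind B B (eta B)) f = f"
    using bind_eta mu_seta idl s_ob by simp
  show "\<forall>A\<in>Ob X. \<forall>B\<in>Ob X. \<forall>C\<in>Ob X. \<forall>E\<in>Ob X. \<forall>f g h. f \<in> Hom X A (So B) \<longrightarrow> g \<in> Hom X B (So C) \<longrightarrow> h \<in> Hom X C (So E) \<longrightarrow>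
    Cmp X A (So C) (So E) (bind C E h) (Cmp X A (So B) (So C) (bind B C g) f) =
    Cmp X A (So B) (So E) (bind B E (Cmp X B (So C) (So E) (bind C E h) g)) f"
    using K_assoc by blast
qed

lemma K_lk: "is_left_klinear K"
proof -
  have M: "\<forall>A\<in>Ob X. \<forall>B\<in>Ob X.
        Zro X A B \<in> Hom X A B \<and>
        (\<forall>f\<in>Hom X A B. \<forall>g\<in>Hom X A B. Add X f g \<in> Hom X A B) \<and>
        (\<forall>r. \<forall>f\<in>Hom X A B. Smul X r f \<in> Hom X A B) \<and>
        (\<forall>f\<in>Hom X A B. \<forall>g\<in>Hom X A B. \<forall>h\<in>Hom X A B.
            Add X (Add X f g) h = Add X f (Add X g h)) \<and>
        (\<forall>f\<in>Hom X A B. \<forall>g\<in>Hom X A B. Add X f g = Add X g f) \<and>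
        (\<forall>f\<in>Hom X A B. Add X f (Zro X A B) = f) \<and>
        (\<forall>r. \<forall>f\<in>Hom X A B. \<forall>g\<in>Hom X A B.
            Smul X r (Add X f g) = Add X (Smul X r f) (Smul X r g)) \<and>
        (\<forall>r s. \<forall>f\<in>Hom X A B. Smul X (r + s) f = Add X (Smul X r f) (Smul X s f)) \<and>
        (\<forall>r s. \<forall>f\<in>Hom X A B. Smul X (r * s) f = Smul X r (Smul X s f)) \<and>
        (\<forall>f\<in>Hom X A B. Smul X 1 f = f) \<and>
        (\<forall>f\<in>Hom X A B. Smul X 0 f = Zro X A B) \<and>
        (\<forall>r. Smul X r (Zro X A B) = Zro X A B)"
    using conjunct1[OF conjunct2[OF lk[unfolded is_left_klinear_def]]] .
  have M2: "\<forall>A\<in>Ob X. \<forall>B\<in>Ob X.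
        Zro X A (So B) \<in> Hom X A (So B) \<and>
        (\<forall>f\<in>Hom X A (So B). \<forall>g\<in>Hom X A (So B). Add X f g \<in> Hom X A (So B)) \<and>
        (\<forall>r. \<forall>f\<in>Hom X A (So B). Smul X r f \<in> Hom X A (So B)) \<and>
        (\<forall>f\<in>Hom X A (So B). \<forall>g\<in>Hom X A (So B). \<forall>h\<in>Hom X A (So B).
            Add X (Add X f g) h = Add X f (Add X g h)) \<and>
        (\<forall>f\<in>Hom X A (So B). \<forall>g\<in>Hom X A (So B). Add X f g = Add X g f) \<and>
        (\<forall>f\<in>Hom X A (So B). Add X f (Zro X A (So B)) = f) \<and>
        (\<forall>r. \<forall>f\<in>Hom X A (So B). \<forall>g\<in>Hom X A (So B).
            Smul X r (Add X f g) = Add X (Smul X r f) (Smul X r g)) \<and>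
        (\<forall>r s. \<forall>f\<in>Hom X A (So B). Smul X (r + s) f = Add X (Smul X r f) (Smul X s f)) \<and>
        (\<forall>r s. \<forall>f\<in>Hom X A (So B). Smul X (r * s) f = Smul X r (Smul X s f)) \<and>
        (\<forall>f\<in>Hom X A (So B). Smul X 1 f = f) \<and>
        (\<forall>f\<in>Hom X A (So B). Smul X 0 f = Zro X A (So B)) \<and>
        (\<forall>r. Smul X r (Zro X A (So B)) = Zro X A (So B))"
  proof (intro ballI)
    fix A B assume A: "A \<in> Ob X" and B: "B \<in> Ob X"
    show "Zro X A (So B) \<in> Hom X A (So B) \<and>
        (\<forall>f\<in>Hom X A (So B). \<forall>g\<in>Hom X A (So B). Add X f g \<in> Hom X A (So B)) \<and>
        (\<forall>r. \<forall>f\<in>Hom X A (So B). Smul X r f \<in> Hom X A (So B)) \<and>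
        (\<forall>f\<in>Hom X A (So B). \<forall>g\<in>Hom X A (So B). \<forall>h\<in>Hom X A (So B).
            Add X (Add X f g) h = Add X f (Add X g h)) \<and>
        (\<forall>f\<in>Hom X A (So B). \<forall>g\<in>Hom X A (So B). Add X f g = Add X g f) \<and>
        (\<forall>f\<in>Hom X A (So B). Add X f (Zro X A (So B)) = f) \<and>
        (\<forall>r. \<forall>f\<in>Hom X A (So B). \<forall>g\<in>Hom X A (So B).
            Smul X r (Add X f g) = Add X (Smul X r f) (Smul X r g)) \<and>
        (\<forall>r s. \<forall>f\<in>Hom X A (So B). Smul X (r + s) f = Add X (Smul X r f) (Smul X s f)) \<and>
        (\<forall>r s. \<forall>f\<in>Hom X A (So B). Smul X (r * s) f = Smul X r (Smul X s f)) \<and>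
        (\<forall>f\<in>Hom X A (So B). Smul X 1 f = f) \<and>
        (\<forall>f\<in>Hom X A (So B). Smul X 0 f = Zro X A (So B)) \<and>
        (\<forall>r. Smul X r (Zro X A (So B)) = Zro X A (So B))"
      by (rule bspec[OF bspec[OF M A] s_ob[OF B]])
  qed
  have PL: "\<forall>A\<in>Ob X. \<forall>B\<in>Ob X. \<forall>C\<in>Ob X. \<forall>f g x r s.
        f \<in> Hom X B (So C) \<longrightarrow> g \<in> Hom X B (So C) \<longrightarrow> x \<in> Hom X A (So B) \<longrightarrow>
        Cmp X A (So B) (So C) (bind B C (Add X (Smul X r f) (Smul X s g))) x =
        Add X (Smul X r (Cmp X A (So B) (So C) (bind B C f) x)) (Smul X s (Cmp X A (So B) (So C) (bind B C g) x))"
  proof (intro ballI allI impI)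
    fix A B C f g x r s assume A: "A \<in> Ob X" and B: "B \<in> Ob X" and C: "C \<in> Ob X"
      and f: "f \<in> Hom X B (So C)" and g: "g \<in> Hom X B (So C)" and x: "x \<in> Hom X A (So B)"
    show "Cmp X A (So B) (So C) (bind B C (Add X (Smul X r f) (Smul X s g))) x =
        Add X (Smul X r (Cmp X A (So B) (So C) (bind B C f) x)) (Smul X s (Cmp X A (So B) (So C) (bind B C g) x))"
      using bind_lin[OF B C f g] pre_lin[OF A s_ob[OF B] s_ob[OF C] bind_hom[OF B C f] bind_hom[OF B C g] x] by simp
  qed
  show ?thesis unfolding is_left_klinear_def
    apply (rule conjI, rule K_cat)
    apply (rule conjI)
    subgoal unfolding K_sel by (rule M2)
    subgoal unfolding K_sel by (rule PL)
    done
qed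

lemma sw_props:
  assumes As: "set As \<subseteq> Ob X"
  shows "Prd X (map So As) \<in> Ob X" "So (Prd X As) \<in> Ob X" "Prd X As \<in> Ob X"
  using prd_ob[OF mapS[OF As]] s_ob[OF prd_ob[OF As]] prd_ob[OF As] by auto

lemma tupK_hom:
  assumes As: "set As \<subseteq> Ob X" and C: "C \<in> Ob X" and l: "length fs = length As"
    and fs: "\<forall>j<length As. fs ! j \<in> Hom X C (So (As ! j))"
  shows "Cmp X C (Prd X (map So As)) (So (Prd X As)) (omega_inv X X So Sm As) (Tup X C (map So As) fs) \<in> Hom X C (So (Prd X As))"
proof -
  have T: "Tup X C (map So As) fs \<in> Hom X C (Prd X (map So As))"
    using tup_hom[OF mapS[OF As] C] l fs by simp
  show ?thesis using cmp_hom[OF C sw_props(1,2)[OF As] T om_props(2)[OF As]] .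
qed

lemma projK_tupK:
  assumes As: "set As \<subseteq> Ob X" and C: "C \<in> Ob X" and l: "length fs = length As"
    and fs: "\<forall>j<length As. fs ! j \<in> Hom X C (So (As ! j))" and j: "j < length As"
  shows "Cmp X C (So (Prd X As)) (So (As ! j)) (bind (Prd X As) (As ! j) (Cmp X (Prd X As) (As ! j) (So (As ! j)) (eta (As ! j)) (Proj X As j)))
     (Cmp X C (Prd X (map So As)) (So (Prd X As)) (omega_inv X X So Sm As) (Tup X C (map So As) fs)) = fs ! j"
proof -
  have Aj: "As ! j \<in> Ob X" using As j by auto
  have T: "Tup X C (map So As) fs \<in> Hom X C (Prd X (map So As))"
    using tup_hom[OF mapS[OF As] C] l fs by simp
  note O = sw_props[OF As]
  have "Cmp X C (So (Prd X As)) (So (As ! j)) (bind (Prd X As) (As ! j) (Cmp X (Prd X As) (As ! j) (So (As ! j)) (eta (As ! j)) (Proj X As j)))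
     (Cmp X C (Prd X (map So As)) (So (Prd X As)) (omega_inv X X So Sm As) (Tup X C (map So As) fs))
     = Cmp X C (So (Prd X As)) (So (As ! j)) (Sm (Prd X As) (As ! j) (Proj X As j))
     (Cmp X C (Prd X (map So As)) (So (Prd X As)) (omega_inv X X So Sm As) (Tup X C (map So As) fs))"
    using bind_L[OF O(3) Aj proj_hom[OF As j]] by simp
  also have "\<dots> = Cmp X C (Prd X (map So As)) (So (As ! j)) (Cmp X (Prd X (map So As)) (So (Prd X As)) (So (As ! j)) (Sm (Prd X As) (As ! j) (Proj X As j)) (omega_inv X X So Sm As)) (Tup X C (map So As) fs)"
    using assoc[OF C O(1) O(2) s_ob[OF Aj] T om_props(2)[OF As] sproj_hom[OF As j]] .
  also have "\<dots> = Cmp X C (Prd X (map So As)) (So (As ! j)) (Proj X (map So As) j) (Tup X C (map So As) fs)"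
    using sproj_omi[OF As j] by simp
  also have "\<dots> = fs ! j" using proj_tup[OF mapS[OF As] C, of fs j] l fs j by simp
  finally show ?thesis .
qed

lemma tupK_uniq:
  assumes As: "set As \<subseteq> Ob X" and C: "C \<in> Ob X" and g: "g \<in> Hom X C (So (Prd X As))"
  shows "Cmp X C (Prd X (map So As)) (So (Prd X As)) (omega_inv X X So Sm As)
     (Tup X C (map So As) (map (\<lambda>j. Cmp X C (So (Prd X As)) (So (As ! j)) (bind (Prd X As) (As ! j) (Cmp X (Prd X As) (As ! j) (So (As ! j)) (eta (As ! j)) (Proj X As j))) g) [0..<length As])) = g"
proof -
  note O = sw_props[OF As]
  define gs where "gs = map (\<lambda>j. Sm (Prd X As) (As ! j) (Proj X As j)) [0..<length As]"
  have gs: "\<And>j. j < length (map So As) \<Longrightarrow> gs ! j \<in> Hom X (So (Prd X As)) (map So As ! j)"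
    unfolding gs_def using sproj_hom[OF As] by auto
  have lg: "length gs = length (map So As)" unfolding gs_def by simp
  have "map (\<lambda>j. Cmp X C (So (Prd X As)) (So (As ! j)) (bind (Prd X As) (As ! j) (Cmp X (Prd X As) (As ! j) (So (As ! j)) (eta (As ! j)) (Proj X As j))) g) [0..<length As]
     = map (\<lambda>j. Cmp X C (So (Prd X As)) (map So As ! j) (gs ! j) g) [0..<length (map So As)]"
  proof (rule map_cong)
    fix j assume "j \<in> set [0..<length (map So As)]"
    hence j: "j < length As" by simp
    have Aj: "As ! j \<in> Ob X" using As j by auto
    show "Cmp X C (So (Prd X As)) (So (As ! j)) (bind (Prd X As) (As ! j) (Cmp X (Prd X As) (As ! j) (So (As ! j)) (eta (As ! j)) (Proj X As j))) g
      = Cmp X C (So (Prd X As)) (map So As ! j) (gs ! j) g"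
      using bind_L[OF O(3) Aj proj_hom[OF As j]] j unfolding gs_def by simp
  qed simp
  also have "Tup X C (map So As) \<dots> = Cmp X C (So (Prd X As)) (Prd X (map So As)) (omega X X So Sm As) g"
    unfolding om_tup gs_def[symmetric] by (rule tup_comp[OF mapS[OF As] O(2) C lg gs g, symmetric])
  finally have e: "Tup X C (map So As) (map (\<lambda>j. Cmp X C (So (Prd X As)) (So (As ! j)) (bind (Prd X As) (As ! j) (Cmp X (Prd X As) (As ! j) (So (As ! j)) (eta (As ! j)) (Proj X As j))) g) [0..<length As])
     = Cmp X C (So (Prd X As)) (Prd X (map So As)) (omega X X So Sm As) g" .
  show ?thesis unfolding e
    using assoc[OF C O(2) O(1) O(2) g om_props(1)[OF As] om_props(2)[OF As]] om_props(3)[OF As] idl[OF C O(2) g] by simp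
qed

lemma K_fp: "has_finite_products K"
  unfolding has_finite_products_def K_sel
  apply (intro allI impI conjI ballI)
  subgoal by (rule prd_ob)
  subgoal for As j by (rule cmp_hom[OF prd_ob _ s_ob proj_hom eta_hom]) auto
  subgoal by (rule tupK_hom) auto
  subgoal by (rule projK_tupK) auto
  subgoal by (rule tupK_uniq) auto
  done

lemma K_clk: "is_cartesian_left_klinear K"
  unfolding is_cartesian_left_klinear_def
  apply (intro conjI K_lk K_fp)
  unfolding K_sel is_klinear_map_def
  apply (intro allI impI ballI)
  subgoal premises p for As j C x y r s
  proof -
    note O = sw_props[OF p(1)]
    have Aj: "As ! j \<in> Ob X" using p by auto
    have xy: "Add X (Smul X r x) (Smul X s y) \<in> Hom X C (So (Prd X As))" using p O by (intro add_hom smul_hom) auto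
    have L: "\<And>z. z \<in> Hom X C (So (Prd X As)) \<Longrightarrow> Cmp X C (So (Prd X As)) (So (As ! j)) (bind (Prd X As) (As ! j) (Cmp X (Prd X As) (As ! j) (So (As ! j)) (eta (As ! j)) (Proj X As j))) z
      = Cmp X C (So (Prd X As)) (So (As ! j)) (Sm (Prd X As) (As ! j) (Proj X As j)) z"
      using bind_L[OF O(3) Aj proj_hom[OF p(1) p(2)]] by simp
    show ?thesis using L[OF xy] L[OF p(4)] L[OF p(5)]
      dlin_klin[OF O(2) s_ob[OF Aj] p(3) sproj_hom[OF p(1,2)] sproj_dlin[OF p(1,2)] p(4) p(5)] by simp
  qed
  done

lemma tupK2_L:
  assumes A: "A \<in> Ob X" and B: "B \<in> Ob X" and C: "C \<in> Ob X" and f: "f \<in> Hom X C A" and g: "g \<in> Hom X C B"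
  shows "Cmp X C (Prd X [So A, So B]) (So (Prd X [A, B])) (omega_inv X X So Sm [A, B])
     (Tup X C [So A, So B] [Cmp X C A (So A) (eta A) f, Cmp X C B (So B) (eta B) g])
   = Cmp X C (Prd X [A, B]) (So (Prd X [A, B])) (eta (Prd X [A, B])) (Tup X C [A, B] [f, g])"
proof -
  have "Cmp X C (Prd X (map So [A, B])) (So (Prd X [A, B])) (omega_inv X X So Sm [A, B])
     (Tup X C (map So [A, B]) [Cmp X C A (So A) (eta A) f, Cmp X C B (So B) (eta B) g])
   = Cmp X C (Prd X [A, B]) (So (Prd X [A, B])) (eta (Prd X [A, B])) (Tup X C [A, B] [f, g])"
  proof (rule tupK_L)
    show "set [A, B] \<subseteq> Ob X" using A B by simp
    fix j assume j: "j < length [A, B]"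
    hence "j = 0 \<or> j = 1" by auto
    thus "[f, g] ! j \<in> Hom X C ([A, B] ! j)" using f g by auto
    show "[Cmp X C A (So A) (eta A) f, Cmp X C B (So B) (eta B) g] ! j = Cmp X C ([A, B] ! j) (So ([A, B] ! j)) (eta ([A, B] ! j)) ([f, g] ! j)"
      using \<open>j = 0 \<or> j = 1\<close> by auto
  qed (use C in auto)
  thus ?thesis by simp
qed

lemma nth_test: "[a, b, c, d] ! 2 = c \<and> [a, b, c, d] ! 3 = d \<and> [a,b,c] ! 2 = c \<and> [a, b] ! 1 = b"
  by simp

lemma K_CD2:
  assumes A: "A \<in> Ob X" and B: "B \<in> Ob X" and f: "f \<in> Hom X A (So B)"
  shows "Cmp X (Prd X [A, A, A]) (So (Prd X [A, A])) (So B) (bind (Prd X [A, A]) B (Dif X A (So B) f))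
     (Cmp X (Prd X [A, A, A]) (Prd X [So A, So A]) (So (Prd X [A, A])) (omega_inv X X So Sm [A, A])
       (Tup X (Prd X [A, A, A]) [So A, So A] [Cmp X (Prd X [A, A, A]) A (So A) (eta A) (Proj X [A, A, A] 0),
          Add X (Smul X r (Cmp X (Prd X [A, A, A]) A (So A) (eta A) (Proj X [A, A, A] 1))) (Smul X s (Cmp X (Prd X [A, A, A]) A (So A) (eta A) (Proj X [A, A, A] 2)))]))
   = Add X (Smul X r (Cmp X (Prd X [A, A, A]) (So (Prd X [A, A])) (So B) (bind (Prd X [A, A]) B (Dif X A (So B) f))
     (Cmp X (Prd X [A, A, A]) (Prd X [So A, So A]) (So (Prd X [A, A])) (omega_inv X X So Sm [A, A])
       (Tup X (Prd X [A, A, A]) [So A, So A] [Cmp X (Prd X [A, A, A]) A (So A) (eta A) (Proj X [A, A, A] 0), Cmp X (Prd X [A, A, A]) A (So A) (eta A) (Proj X [A, A, A] 1)]))))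
     (Smul X s (Cmp X (Prd X [A, A, A]) (So (Prd X [A, A])) (So B) (bind (Prd X [A, A]) B (Dif X A (So B) f))
     (Cmp X (Prd X [A, A, A]) (Prd X [So A, So A]) (So (Prd X [A, A])) (omega_inv X X So Sm [A, A])
       (Tup X (Prd X [A, A, A]) [So A, So A] [Cmp X (Prd X [A, A, A]) A (So A) (eta A) (Proj X [A, A, A] 0), Cmp X (Prd X [A, A, A]) A (So A) (eta A) (Proj X [A, A, A] 2)]))))"
proof -
  define P3 where "P3 = Prd X [A, A, A]"
  define P2 where "P2 = Prd X [A, A]"
  define p where "p = Proj X [A, A, A]"
  have P3: "P3 \<in> Ob X" unfolding P3_def using ob3[OF A A A] .
  have P2: "P2 \<in> Ob X" unfolding P2_def using ob2[OF A A] .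
  have SB: "So B \<in> Ob X" using s_ob[OF B] .
  have p: "p 0 \<in> Hom X P3 A" "p 1 \<in> Hom X P3 A" "p 2 \<in> Hom X P3 A"
    unfolding p_def P3_def using proj3_hom[OF A A A] by auto
  have lc: "Add X (Smul X r (p 1)) (Smul X s (p 2)) \<in> Hom X P3 A"
    using p A P3 by (intro add_hom smul_hom) auto
  have Df: "Dif X A (So B) f \<in> Hom X P2 (So B)" unfolding P2_def by (rule dif_hom[OF A SB f])
  have el: "Add X (Smul X r (Cmp X P3 A (So A) (eta A) (p 1))) (Smul X s (Cmp X P3 A (So A) (eta A) (p 2)))
     = Cmp X P3 A (So A) (eta A) (Add X (Smul X r (p 1)) (Smul X s (p 2)))"
    using eta_lin[OF A P3 p(2) p(3)] by simp
  have t1: "Cmp X P3 (Prd X [So A, So A]) (So P2) (omega_inv X X So Sm [A, A])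
       (Tup X P3 [So A, So A] [Cmp X P3 A (So A) (eta A) (p 0), Cmp X P3 A (So A) (eta A) (Add X (Smul X r (p 1)) (Smul X s (p 2)))])
     = Cmp X P3 P2 (So P2) (eta P2) (Tup X P3 [A, A] [p 0, Add X (Smul X r (p 1)) (Smul X s (p 2))])"
    unfolding P2_def by (rule tupK2_L[OF A A P3 p(1) lc])
  have ta: "Cmp X P3 (Prd X [So A, So A]) (So P2) (omega_inv X X So Sm [A, A])
       (Tup X P3 [So A, So A] [Cmp X P3 A (So A) (eta A) (p 0), Cmp X P3 A (So A) (eta A) (p 1)])
     = Cmp X P3 P2 (So P2) (eta P2) (Tup X P3 [A, A] [p 0, p 1])"
    unfolding P2_def by (rule tupK2_L[OF A A P3 p(1) p(2)])
  have tb: "Cmp X P3 (Prd X [So A, So A]) (So P2) (omega_inv X X So Sm [A, A])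
       (Tup X P3 [So A, So A] [Cmp X P3 A (So A) (eta A) (p 0), Cmp X P3 A (So A) (eta A) (p 2)])
     = Cmp X P3 P2 (So P2) (eta P2) (Tup X P3 [A, A] [p 0, p 2])"
    unfolding P2_def by (rule tupK2_L[OF A A P3 p(1) p(3)])
  have c1: "Cmp X P3 (So P2) (So B) (bind P2 B (Dif X A (So B) f)) (Cmp X P3 P2 (So P2) (eta P2) (Tup X P3 [A, A] [p 0, Add X (Smul X r (p 1)) (Smul X s (p 2))]))
    = Cmp X P3 P2 (So B) (Dif X A (So B) f) (Tup X P3 [A, A] [p 0, Add X (Smul X r (p 1)) (Smul X s (p 2))])"
    by (rule cmpK_L[OF P3 P2 B Df tup2_hom[OF A A P3 p(1) lc, folded P2_def]])
  have ca: "Cmp X P3 (So P2) (So B) (bind P2 B (Dif X A (So B) f)) (Cmp X P3 P2 (So P2) (eta P2) (Tup X P3 [A, A] [p 0, p 1]))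
    = Cmp X P3 P2 (So B) (Dif X A (So B) f) (Tup X P3 [A, A] [p 0, p 1])"
    by (rule cmpK_L[OF P3 P2 B Df tup2_hom[OF A A P3 p(1) p(2), folded P2_def]])
  have cb: "Cmp X P3 (So P2) (So B) (bind P2 B (Dif X A (So B) f)) (Cmp X P3 P2 (So P2) (eta P2) (Tup X P3 [A, A] [p 0, p 2]))
    = Cmp X P3 P2 (So B) (Dif X A (So B) f) (Tup X P3 [A, A] [p 0, p 2])"
    by (rule cmpK_L[OF P3 P2 B Df tup2_hom[OF A A P3 p(1) p(3), folded P2_def]])
  have c2: "Cmp X P3 P2 (So B) (Dif X A (So B) f) (Tup X P3 [A, A] [p 0, Add X (Smul X r (p 1)) (Smul X s (p 2))]) =
     Add X (Smul X r (Cmp X P3 P2 (So B) (Dif X A (So B) f) (Tup X P3 [A, A] [p 0, p 1])))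
           (Smul X s (Cmp X P3 P2 (So B) (Dif X A (So B) f) (Tup X P3 [A, A] [p 0, p 2])))"
    unfolding P3_def P2_def p_def using cd2[OF A SB f] .
  show ?thesis unfolding P3_def[symmetric] P2_def[symmetric] p_def[symmetric]
    using el t1 ta tb c1 ca cb c2 by simp
qed

lemma K_CD3b:
  assumes As: "set As \<subseteq> Ob X" and j: "j < length As"
  shows "Dif X (Prd X As) (So (As ! j)) (Cmp X (Prd X As) (As ! j) (So (As ! j)) (eta (As ! j)) (Proj X As j)) =
    Cmp X (Prd X [Prd X As, Prd X As]) (So (Prd X As)) (So (As ! j)) (bind (Prd X As) (As ! j) (Cmp X (Prd X As) (As ! j) (So (As ! j)) (eta (As ! j)) (Proj X As j)))
      (Cmp X (Prd X [Prd X As, Prd X As]) (Prd X As) (So (Prd X As)) (eta (Prd X As)) (Proj X [Prd X As, Prd X As] 1))"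
proof -
  define P where "P = Prd X As"
  have P: "P \<in> Ob X" unfolding P_def using prd_ob[OF As] .
  have Aj: "As ! j \<in> Ob X" using As j by auto
  have PP: "Prd X [P, P] \<in> Ob X" using ob2[OF P P] .
  have pj: "Proj X As j \<in> Hom X P (As ! j)" unfolding P_def using proj_hom[OF As j] .
  have p1: "Proj X [P, P] 1 \<in> Hom X (Prd X [P, P]) P" using proj2_hom[OF P P] by simp
  have epj: "Cmp X P (As ! j) (So (As ! j)) (eta (As ! j)) (Proj X As j) \<in> Hom X P (So (As ! j))"
    using cmp_hom[OF P Aj s_ob[OF Aj] pj eta_hom[OF Aj]] .
  have "Dif X P (So (As ! j)) (Cmp X P (As ! j) (So (As ! j)) (eta (As ! j)) (Proj X As j))
     = Cmp X (Prd X [P, P]) (As ! j) (So (As ! j)) (eta (As ! j)) (Dif X P (As ! j) (Proj X As j))"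
    by (rule dlin_comp[OF P Aj s_ob[OF Aj] pj eta_hom[OF Aj] eta_dlin[OF Aj]])
  also have "\<dots> = Cmp X (Prd X [P, P]) (As ! j) (So (As ! j)) (eta (As ! j)) (Cmp X (Prd X [P, P]) P (As ! j) (Proj X As j) (Proj X [P, P] 1))"
    using cd3b[OF As j] unfolding P_def by simp
  also have "\<dots> = Cmp X (Prd X [P, P]) P (So (As ! j)) (Cmp X P (As ! j) (So (As ! j)) (eta (As ! j)) (Proj X As j)) (Proj X [P, P] 1)"
    by (rule assoc[OF PP P Aj s_ob[OF Aj] p1 pj eta_hom[OF Aj]])
  also have "\<dots> = Cmp X (Prd X [P, P]) (So P) (So (As ! j)) (bind P (As ! j) (Cmp X P (As ! j) (So (As ! j)) (eta (As ! j)) (Proj X As j)))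
      (Cmp X (Prd X [P, P]) P (So P) (eta P) (Proj X [P, P] 1))"
    by (rule cmpK_L[symmetric, OF PP P Aj epj p1])
  finally show ?thesis unfolding P_def .
qed

lemma K_CD4:
  assumes A: "A \<in> Ob X" and Bs: "set Bs \<subseteq> Ob X" and l: "length fs = length Bs"
    and fs: "\<forall>j<length Bs. fs ! j \<in> Hom X A (So (Bs ! j))"
  shows "Dif X A (So (Prd X Bs)) (Cmp X A (Prd X (map So Bs)) (So (Prd X Bs)) (omega_inv X X So Sm Bs) (Tup X A (map So Bs) fs)) =
     Cmp X (Prd X [A, A]) (Prd X (map So Bs)) (So (Prd X Bs)) (omega_inv X X So Sm Bs)
       (Tup X (Prd X [A, A]) (map So Bs) (map (\<lambda>j. Dif X A (So (Bs ! j)) (fs ! j)) [0..<length Bs]))"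
proof -
  note O = sw_props[OF Bs]
  have fs': "\<And>j. j < length (map So Bs) \<Longrightarrow> fs ! j \<in> Hom X A (map So Bs ! j)" using fs by simp
  have l': "length fs = length (map So Bs)" using l by simp
  have T: "Tup X A (map So Bs) fs \<in> Hom X A (Prd X (map So Bs))" using tup_hom[OF mapS[OF Bs] A l' fs'] .
  have "Dif X A (So (Prd X Bs)) (Cmp X A (Prd X (map So Bs)) (So (Prd X Bs)) (omega_inv X X So Sm Bs) (Tup X A (map So Bs) fs))
     = Cmp X (Prd X [A, A]) (Prd X (map So Bs)) (So (Prd X Bs)) (omega_inv X X So Sm Bs) (Dif X A (Prd X (map So Bs)) (Tup X A (map So Bs) fs))"
    by (rule dlin_comp[OF A O(1) O(2) T om_props(2)[OF Bs] omi_dlin[OF Bs]])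
  also have "Dif X A (Prd X (map So Bs)) (Tup X A (map So Bs) fs) = Tup X (Prd X [A, A]) (map So Bs) (map (\<lambda>j. Dif X A (map So Bs ! j) (fs ! j)) [0..<length (map So Bs)])"
    by (rule cd4[OF A mapS[OF Bs] l' fs'])
  also have "map (\<lambda>j. Dif X A (map So Bs ! j) (fs ! j)) [0..<length (map So Bs)] = map (\<lambda>j. Dif X A (So (Bs ! j)) (fs ! j)) [0..<length Bs]"
    by (rule map_cong) auto
  finally show ?thesis .
qed

lemma K_CD5:
  assumes A: "A \<in> Ob X" and B: "B \<in> Ob X" and C: "C \<in> Ob X" and f: "f \<in> Hom X A (So B)" and g: "g \<in> Hom X B (So C)"
  shows "Dif X A (So C) (Cmp X A (So B) (So C) (bind B C g) f) =
    Cmp X (Prd X [A, A]) (So (Prd X [B, B])) (So C) (bind (Prd X [B, B]) C (Dif X B (So C) g))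
      (Cmp X (Prd X [A, A]) (Prd X [So B, So B]) (So (Prd X [B, B])) (omega_inv X X So Sm [B, B])
        (Tup X (Prd X [A, A]) [So B, So B]
          [Cmp X (Prd X [A, A]) (So A) (So B) (bind A B f) (Cmp X (Prd X [A, A]) A (So A) (eta A) (Proj X [A, A] 0)),
           Dif X A (So B) f]))"
proof -
  define PA where "PA = Prd X [A, A]"
  define PB where "PB = Prd X [B, B]"
  define Q where "Q = Prd X [So B, So B]"
  have PA: "PA \<in> Ob X" unfolding PA_def using ob2[OF A A] .
  have PB: "PB \<in> Ob X" unfolding PB_def using ob2[OF B B] .
  have SB: "So B \<in> Ob X" and SC: "So C \<in> Ob X" and SSC: "So (So C) \<in> Ob X" and SPB: "So PB \<in> Ob X"
    using s_ob B C PB by auto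
  have Q: "Q \<in> Ob X" unfolding Q_def using ob2[OF SB SB] .
  have p0: "Proj X [A, A] 0 \<in> Hom X PA A" unfolding PA_def using proj2_hom[OF A A] by simp
  have fp: "Cmp X PA A (So B) f (Proj X [A, A] 0) \<in> Hom X PA (So B)" using cmp_hom[OF PA A SB p0 f] .
  have Df: "Dif X A (So B) f \<in> Hom X PA (So B)" unfolding PA_def using dif_hom[OF A SB f] .
  have T: "Tup X PA [So B, So B] [Cmp X PA A (So B) f (Proj X [A, A] 0), Dif X A (So B) f] \<in> Hom X PA Q"
    unfolding Q_def using tup2_hom[OF SB SB PA fp Df] .
  have Sg: "Sm B (So C) g \<in> Hom X (So B) (So (So C))" using sm_hom[OF B SC g] .
  have Dg: "Dif X B (So C) g \<in> Hom X PB (So C)" unfolding PB_def using dif_hom[OF B SC g] .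
  have SDg: "Sm PB (So C) (Dif X B (So C) g) \<in> Hom X (So PB) (So (So C))" using sm_hom[OF PB SC Dg] .
  have omi: "omega_inv X X So Sm [B, B] \<in> Hom X Q (So PB)" unfolding Q_def PB_def using om_props(2)[of "[B,B]"] B by simp
  have e1: "Cmp X PA (So A) (So B) (bind A B f) (Cmp X PA A (So A) (eta A) (Proj X [A, A] 0)) = Cmp X PA A (So B) f (Proj X [A, A] 0)"
    by (rule cmpK_L[OF PA A B f p0])
  have "Dif X A (So C) (Cmp X A (So B) (So C) (bind B C g) f)
     = Cmp X PA (Prd X [So B, So B]) (So C) (Dif X (So B) (So C) (bind B C g))
          (Tup X PA [So B, So B] [Cmp X PA A (So B) f (Proj X [A, A] 0), Dif X A (So B) f])"
    unfolding PA_def by (rule cd5[OF A SB SC f bind_hom[OF B C g]])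
  also have "Dif X (So B) (So C) (bind B C g) = Cmp X (Prd X [So B, So B]) (So (So C)) (So C) (mu C) (Dif X (So B) (So (So C)) (Sm B (So C) g))"
    by (rule dlin_comp[OF SB SSC SC Sg mu_hom[OF C] mu_dlin[OF C]])
  also have "Dif X (So B) (So (So C)) (Sm B (So C) g) = Cmp X Q (So PB) (So (So C)) (Sm PB (So C) (Dif X B (So C) g)) (omega_inv X X So Sm [B, B])"
    unfolding Q_def PB_def by (rule sm_dif[OF B SC g])
  finally have L: "Dif X A (So C) (Cmp X A (So B) (So C) (bind B C g) f) =
     Cmp X PA Q (So C) (Cmp X Q (So (So C)) (So C) (mu C) (Cmp X Q (So PB) (So (So C)) (Sm PB (So C) (Dif X B (So C) g)) (omega_inv X X So Sm [B, B])))
      (Tup X PA [So B, So B] [Cmp X PA A (So B) f (Proj X [A, A] 0), Dif X A (So B) f])" unfolding Q_def .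
  have m: "Cmp X Q (So (So C)) (So C) (mu C) (Cmp X Q (So PB) (So (So C)) (Sm PB (So C) (Dif X B (So C) g)) (omega_inv X X So Sm [B, B]))
     = Cmp X Q (So PB) (So C) (bind PB C (Dif X B (So C) g)) (omega_inv X X So Sm [B, B])"
    by (rule assoc[OF Q SPB SSC SC omi SDg mu_hom[OF C]])
  have n: "Cmp X PA Q (So C) (Cmp X Q (So PB) (So C) (bind PB C (Dif X B (So C) g)) (omega_inv X X So Sm [B, B]))
      (Tup X PA [So B, So B] [Cmp X PA A (So B) f (Proj X [A, A] 0), Dif X A (So B) f])
    = Cmp X PA (So PB) (So C) (bind PB C (Dif X B (So C) g)) (Cmp X PA Q (So PB) (omega_inv X X So Sm [B, B])
      (Tup X PA [So B, So B] [Cmp X PA A (So B) f (Proj X [A, A] 0), Dif X A (So B) f]))"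
    by (rule assoc[symmetric, OF PA Q SPB SC T omi bind_hom[OF PB C Dg]])
  show ?thesis using L m n e1 unfolding PA_def PB_def Q_def by simp
qed

lemma K_CD6:
  assumes A: "A \<in> Ob X" and B: "B \<in> Ob X" and f: "f \<in> Hom X A (So B)"
  shows "Cmp X (Prd X [A, A]) (So (Prd X [Prd X [A, A], Prd X [A, A]])) (So B)
     (bind (Prd X [Prd X [A, A], Prd X [A, A]]) B (Dif X (Prd X [A, A]) (So B) (Dif X A (So B) f)))
     (Cmp X (Prd X [A, A]) (Prd X [So (Prd X [A, A]), So (Prd X [A, A])]) (So (Prd X [Prd X [A, A], Prd X [A, A]])) (omega_inv X X So Sm [Prd X [A, A], Prd X [A, A]])
       (Tup X (Prd X [A, A]) [So (Prd X [A, A]), So (Prd X [A, A])]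
         [Cmp X (Prd X [A, A]) (Prd X [So A, So A]) (So (Prd X [A, A])) (omega_inv X X So Sm [A, A])
            (Tup X (Prd X [A, A]) [So A, So A] [Cmp X (Prd X [A, A]) A (So A) (eta A) (Proj X [A, A] 0), Zro X (Prd X [A, A]) (So A)]),
          Cmp X (Prd X [A, A]) (Prd X [So A, So A]) (So (Prd X [A, A])) (omega_inv X X So Sm [A, A])
            (Tup X (Prd X [A, A]) [So A, So A] [Zro X (Prd X [A, A]) (So A), Cmp X (Prd X [A, A]) A (So A) (eta A) (Proj X [A, A] 1)])]))
   = Dif X A (So B) f"
proof -
  define P2 where "P2 = Prd X [A, A]"
  define PP where "PP = Prd X [P2, P2]"
  have P2: "P2 \<in> Ob X" unfolding P2_def using ob2[OF A A] .
  have PP: "PP \<in> Ob X" unfolding PP_def using ob2[OF P2 P2] .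
  have SB: "So B \<in> Ob X" using s_ob[OF B] .
  have p: "Proj X [A, A] 0 \<in> Hom X P2 A" "Proj X [A, A] 1 \<in> Hom X P2 A" unfolding P2_def using proj2_hom[OF A A] by auto
  have Z: "Zro X P2 A \<in> Hom X P2 A" using zro_hom[OF P2 A] .
  have ez: "Zro X P2 (So A) = Cmp X P2 A (So A) (eta A) (Zro X P2 A)" using eta_zro[OF A P2] by simp
  have T1: "Tup X P2 [A, A] [Proj X [A, A] 0, Zro X P2 A] \<in> Hom X P2 P2" unfolding P2_def using tup2_hom[OF A A P2[unfolded P2_def] p(1)[unfolded P2_def] Z[unfolded P2_def]] .
  have T2: "Tup X P2 [A, A] [Zro X P2 A, Proj X [A, A] 1] \<in> Hom X P2 P2" unfolding P2_def using tup2_hom[OF A A P2[unfolded P2_def] Z[unfolded P2_def] p(2)[unfolded P2_def]] .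
  have i1: "Cmp X P2 (Prd X [So A, So A]) (So P2) (omega_inv X X So Sm [A, A])
            (Tup X P2 [So A, So A] [Cmp X P2 A (So A) (eta A) (Proj X [A, A] 0), Zro X P2 (So A)])
      = Cmp X P2 P2 (So P2) (eta P2) (Tup X P2 [A, A] [Proj X [A, A] 0, Zro X P2 A])"
    unfolding ez using tupK2_L[OF A A P2 p(1) Z] unfolding P2_def .
  have i2: "Cmp X P2 (Prd X [So A, So A]) (So P2) (omega_inv X X So Sm [A, A])
            (Tup X P2 [So A, So A] [Zro X P2 (So A), Cmp X P2 A (So A) (eta A) (Proj X [A, A] 1)])
      = Cmp X P2 P2 (So P2) (eta P2) (Tup X P2 [A, A] [Zro X P2 A, Proj X [A, A] 1])"
    unfolding ez using tupK2_L[OF A A P2 Z p(2)] unfolding P2_def .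
  have o: "Cmp X P2 (Prd X [So P2, So P2]) (So PP) (omega_inv X X So Sm [P2, P2])
     (Tup X P2 [So P2, So P2] [Cmp X P2 P2 (So P2) (eta P2) (Tup X P2 [A, A] [Proj X [A, A] 0, Zro X P2 A]), Cmp X P2 P2 (So P2) (eta P2) (Tup X P2 [A, A] [Zro X P2 A, Proj X [A, A] 1])])
     = Cmp X P2 PP (So PP) (eta PP) (Tup X P2 [P2, P2] [Tup X P2 [A, A] [Proj X [A, A] 0, Zro X P2 A], Tup X P2 [A, A] [Zro X P2 A, Proj X [A, A] 1]])"
    unfolding PP_def by (rule tupK2_L[OF P2 P2 P2 T1 T2])
  have DDf: "Dif X P2 (So B) (Dif X A (So B) f) \<in> Hom X PP (So B)"
    unfolding PP_def by (rule dif_hom[OF P2 SB]) (unfold P2_def, rule dif_hom[OF A SB f])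
  have TT: "Tup X P2 [P2, P2] [Tup X P2 [A, A] [Proj X [A, A] 0, Zro X P2 A], Tup X P2 [A, A] [Zro X P2 A, Proj X [A, A] 1]] \<in> Hom X P2 PP"
    unfolding PP_def by (rule tup2_hom[OF P2 P2 P2 T1 T2])
  have c: "Cmp X P2 (So PP) (So B) (bind PP B (Dif X P2 (So B) (Dif X A (So B) f)))
       (Cmp X P2 PP (So PP) (eta PP) (Tup X P2 [P2, P2] [Tup X P2 [A, A] [Proj X [A, A] 0, Zro X P2 A], Tup X P2 [A, A] [Zro X P2 A, Proj X [A, A] 1]]))
     = Cmp X P2 PP (So B) (Dif X P2 (So B) (Dif X A (So B) f)) (Tup X P2 [P2, P2] [Tup X P2 [A, A] [Proj X [A, A] 0, Zro X P2 A], Tup X P2 [A, A] [Zro X P2 A, Proj X [A, A] 1]])"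
    by (rule cmpK_L[OF P2 PP B DDf TT])
  have d: "Cmp X P2 PP (So B) (Dif X P2 (So B) (Dif X A (So B) f)) (Tup X P2 [P2, P2] [Tup X P2 [A, A] [Proj X [A, A] 0, Zro X P2 A], Tup X P2 [A, A] [Zro X P2 A, Proj X [A, A] 1]])
     = Dif X A (So B) f"
    unfolding PP_def P2_def by (rule cd6[OF A SB f])
  show ?thesis unfolding P2_def[symmetric] PP_def[symmetric] using i1 i2 o c d by simp
qed

lemma K_CD7:
  assumes A: "A \<in> Ob X" and B: "B \<in> Ob X" and f: "f \<in> Hom X A (So B)"
  shows "Cmp X (Prd X [A, A, A, A]) (So (Prd X [Prd X [A, A], Prd X [A, A]])) (So B)
     (bind (Prd X [Prd X [A, A], Prd X [A, A]]) B (Dif X (Prd X [A, A]) (So B) (Dif X A (So B) f)))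
     (Cmp X (Prd X [A, A, A, A]) (Prd X [So (Prd X [A, A]), So (Prd X [A, A])]) (So (Prd X [Prd X [A, A], Prd X [A, A]])) (omega_inv X X So Sm [Prd X [A, A], Prd X [A, A]])
       (Tup X (Prd X [A, A, A, A]) [So (Prd X [A, A]), So (Prd X [A, A])]
         [Cmp X (Prd X [A, A, A, A]) (Prd X [So A, So A]) (So (Prd X [A, A])) (omega_inv X X So Sm [A, A])
            (Tup X (Prd X [A, A, A, A]) [So A, So A] [Cmp X (Prd X [A, A, A, A]) A (So A) (eta A) (Proj X [A, A, A, A] 0), Cmp X (Prd X [A, A, A, A]) A (So A) (eta A) (Proj X [A, A, A, A] 1)]),
          Cmp X (Prd X [A, A, A, A]) (Prd X [So A, So A]) (So (Prd X [A, A])) (omega_inv X X So Sm [A, A])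
            (Tup X (Prd X [A, A, A, A]) [So A, So A] [Cmp X (Prd X [A, A, A, A]) A (So A) (eta A) (Proj X [A, A, A, A] 2), Cmp X (Prd X [A, A, A, A]) A (So A) (eta A) (Proj X [A, A, A, A] 3)])]))
   = Cmp X (Prd X [A, A, A, A]) (So (Prd X [Prd X [A, A], Prd X [A, A]])) (So B)
     (bind (Prd X [Prd X [A, A], Prd X [A, A]]) B (Dif X (Prd X [A, A]) (So B) (Dif X A (So B) f)))
     (Cmp X (Prd X [A, A, A, A]) (Prd X [So (Prd X [A, A]), So (Prd X [A, A])]) (So (Prd X [Prd X [A, A], Prd X [A, A]])) (omega_inv X X So Sm [Prd X [A, A], Prd X [A, A]])
       (Tup X (Prd X [A, A, A, A]) [So (Prd X [A, A]), So (Prd X [A, A])]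
         [Cmp X (Prd X [A, A, A, A]) (Prd X [So A, So A]) (So (Prd X [A, A])) (omega_inv X X So Sm [A, A])
            (Tup X (Prd X [A, A, A, A]) [So A, So A] [Cmp X (Prd X [A, A, A, A]) A (So A) (eta A) (Proj X [A, A, A, A] 0), Cmp X (Prd X [A, A, A, A]) A (So A) (eta A) (Proj X [A, A, A, A] 2)]),
          Cmp X (Prd X [A, A, A, A]) (Prd X [So A, So A]) (So (Prd X [A, A])) (omega_inv X X So Sm [A, A])
            (Tup X (Prd X [A, A, A, A]) [So A, So A] [Cmp X (Prd X [A, A, A, A]) A (So A) (eta A) (Proj X [A, A, A, A] 1), Cmp X (Prd X [A, A, A, A]) A (So A) (eta A) (Proj X [A, A, A, A] 3)])]))"
proof -
  define P2 where "P2 = Prd X [A, A]"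
  define PP where "PP = Prd X [P2, P2]"
  define P4 where "P4 = Prd X [A, A, A, A]"
  define q where "q = Proj X [A, A, A, A]"
  have P2: "P2 \<in> Ob X" unfolding P2_def using ob2[OF A A] .
  have PP: "PP \<in> Ob X" unfolding PP_def using ob2[OF P2 P2] .
  have P4: "P4 \<in> Ob X" unfolding P4_def by (rule prd_ob) (use A in auto)
  have SB: "So B \<in> Ob X" using s_ob[OF B] .
  have q: "\<And>i. i < 4 \<Longrightarrow> q i \<in> Hom X P4 A"
  proof -
    fix i :: nat assume i: "i < 4"
    have "i = 0 \<or> i = 1 \<or> i = 2 \<or> i = 3" using i by auto
    hence "[A, A, A, A] ! i = A" by auto
    thus "q i \<in> Hom X P4 A" unfolding q_def P4_def using proj_hom[of "[A, A, A, A]" i] A i by simp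
  qed
  have DDf: "Dif X P2 (So B) (Dif X A (So B) f) \<in> Hom X PP (So B)"
    unfolding PP_def by (rule dif_hom[OF P2 SB]) (unfold P2_def, rule dif_hom[OF A SB f])
  have gen: "\<And>a b c d. a < 4 \<Longrightarrow> b < 4 \<Longrightarrow> c < 4 \<Longrightarrow> d < 4 \<Longrightarrow>
     Cmp X P4 (So PP) (So B) (bind PP B (Dif X P2 (So B) (Dif X A (So B) f)))
     (Cmp X P4 (Prd X [So P2, So P2]) (So PP) (omega_inv X X So Sm [P2, P2])
       (Tup X P4 [So P2, So P2]
         [Cmp X P4 (Prd X [So A, So A]) (So P2) (omega_inv X X So Sm [A, A])
            (Tup X P4 [So A, So A] [Cmp X P4 A (So A) (eta A) (q a), Cmp X P4 A (So A) (eta A) (q b)]),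
          Cmp X P4 (Prd X [So A, So A]) (So P2) (omega_inv X X So Sm [A, A])
            (Tup X P4 [So A, So A] [Cmp X P4 A (So A) (eta A) (q c), Cmp X P4 A (So A) (eta A) (q d)])]))
   = Cmp X P4 PP (So B) (Dif X P2 (So B) (Dif X A (So B) f)) (Tup X P4 [P2, P2] [Tup X P4 [A, A] [q a, q b], Tup X P4 [A, A] [q c, q d]])"
  proof -
    fix a b c d :: nat assume a: "a < 4" and b: "b < 4" and c: "c < 4" and d: "d < 4"
    have T1: "Tup X P4 [A, A] [q a, q b] \<in> Hom X P4 P2" unfolding P2_def by (rule tup2_hom[OF A A P4 q[OF a] q[OF b]])
    have T2: "Tup X P4 [A, A] [q c, q d] \<in> Hom X P4 P2" unfolding P2_def by (rule tup2_hom[OF A A P4 q[OF c] q[OF d]])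
    have i1: "Cmp X P4 (Prd X [So A, So A]) (So P2) (omega_inv X X So Sm [A, A])
            (Tup X P4 [So A, So A] [Cmp X P4 A (So A) (eta A) (q a), Cmp X P4 A (So A) (eta A) (q b)])
      = Cmp X P4 P2 (So P2) (eta P2) (Tup X P4 [A, A] [q a, q b])"
      unfolding P2_def by (rule tupK2_L[OF A A P4 q[OF a] q[OF b]])
    have i2: "Cmp X P4 (Prd X [So A, So A]) (So P2) (omega_inv X X So Sm [A, A])
            (Tup X P4 [So A, So A] [Cmp X P4 A (So A) (eta A) (q c), Cmp X P4 A (So A) (eta A) (q d)])
      = Cmp X P4 P2 (So P2) (eta P2) (Tup X P4 [A, A] [q c, q d])"
      unfolding P2_def by (rule tupK2_L[OF A A P4 q[OF c] q[OF d]])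
    have o: "Cmp X P4 (Prd X [So P2, So P2]) (So PP) (omega_inv X X So Sm [P2, P2])
       (Tup X P4 [So P2, So P2] [Cmp X P4 P2 (So P2) (eta P2) (Tup X P4 [A, A] [q a, q b]), Cmp X P4 P2 (So P2) (eta P2) (Tup X P4 [A, A] [q c, q d])])
       = Cmp X P4 PP (So PP) (eta PP) (Tup X P4 [P2, P2] [Tup X P4 [A, A] [q a, q b], Tup X P4 [A, A] [q c, q d]])"
      unfolding PP_def by (rule tupK2_L[OF P2 P2 P4 T1 T2])
    have TT: "Tup X P4 [P2, P2] [Tup X P4 [A, A] [q a, q b], Tup X P4 [A, A] [q c, q d]] \<in> Hom X P4 PP"
      unfolding PP_def by (rule tup2_hom[OF P2 P2 P4 T1 T2])
    show "?thesis a b c d" using i1 i2 o cmpK_L[OF P4 PP B DDf TT] by simp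
  qed
  have e: "Cmp X P4 PP (So B) (Dif X P2 (So B) (Dif X A (So B) f)) (Tup X P4 [P2, P2] [Tup X P4 [A, A] [q 0, q 1], Tup X P4 [A, A] [q 2, q 3]])
     = Cmp X P4 PP (So B) (Dif X P2 (So B) (Dif X A (So B) f)) (Tup X P4 [P2, P2] [Tup X P4 [A, A] [q 0, q 2], Tup X P4 [A, A] [q 1, q 3]])"
    unfolding PP_def P2_def P4_def q_def by (rule cd7[OF A SB f])
  show ?thesis unfolding P2_def[symmetric] PP_def[symmetric] P4_def[symmetric] q_def[symmetric]
    using gen[of 0 1 2 3] gen[of 0 2 1 3] e by simp
qed

lemma K_cd: "is_cartesian_kdiff K"
  unfolding is_cartesian_kdiff_def Let_def
  apply (intro conjI)
  subgoal by (rule K_clk)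
  subgoal unfolding K_sel by (auto intro: dif_hom s_ob)
  subgoal unfolding K_sel by (auto intro: cd1 s_ob)
  subgoal unfolding K_sel apply (intro ballI allI impI)
    subgoal for A B f r s using K_CD2[of A B f r s] by simp
    done
  subgoal unfolding K_sel apply (intro ballI allI impI)
    subgoal for A using eta_dlin[of A] unfolding is_D_linear_def by simp
    done
  subgoal unfolding K_sel apply (intro ballI allI impI)
    subgoal for As j using K_CD3b[of As j] by simp
    done
  subgoal unfolding K_sel apply (intro ballI allI impI)
    subgoal for A Bs fs using K_CD4[of A Bs fs] by simp
    done
  subgoal unfolding K_sel apply (intro ballI allI impI)
    subgoal for A B C f g using K_CD5[of A B C f g] by simp
    done
  subgoal unfolding K_sel apply (intro ballI allI impI)
    subgoal for A B f using K_CD6[of A B f] by simp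
    done
  subgoal unfolding K_sel apply (intro ballI allI impI)
    subgoal for A B f using K_CD7[of A B f] by simp
    done
  done

lemma part2: "\<forall>A\<in>Ob X. \<forall>B\<in>Ob X. \<forall>f. f \<in> Hom K A B \<longrightarrow> (is_D_linear K A B f \<longleftrightarrow> is_D_linear X A (So B) f)"
  unfolding is_D_linear_def K_sel
proof (intro ballI allI impI)
  fix A B f assume A: "A \<in> Ob X" and B: "B \<in> Ob X" and f: "f \<in> Hom X A (So B)"
  have p1: "Proj X [A, A] 1 \<in> Hom X (Prd X [A, A]) A" using proj2_hom[OF A A] by simp
  show "(Dif X A (So B) f = Cmp X (Prd X [A, A]) (So A) (So B) (bind A B f) (Cmp X (Prd X [A, A]) ([A, A] ! 1) (So ([A, A] ! 1)) (eta ([A, A] ! 1)) (Proj X [A, A] 1))) =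
         (Dif X A (So B) f = Cmp X (Prd X [A, A]) A (So B) f (Proj X [A, A] 1))"
    using cmpK_L[OF ob2[OF A A] A B f p1] by simp
qed

lemma Lob: "kleisli_L_ob = (\<lambda>A. A)" by (rule ext) (simp add: kleisli_L_ob_def)

lemma tup_projs: "set As \<subseteq> Ob X \<Longrightarrow> Tup X (Prd X As) As (map (Proj X As) [0..<length As]) = Idm X (Prd X As)"
proof -
  assume As: "set As \<subseteq> Ob X"
  have "Tup X (Prd X As) As (map (\<lambda>j. Cmp X (Prd X As) (Prd X As) (As ! j) (Proj X As j) (Idm X (Prd X As))) [0..<length As]) = Idm X (Prd X As)"
    by (rule tup_uniq[OF As prd_ob[OF As] idm_hom[OF prd_ob[OF As]]])
  moreover have "map (\<lambda>j. Cmp X (Prd X As) (Prd X As) (As ! j) (Proj X As j) (Idm X (Prd X As))) [0..<length As] = map (Proj X As) [0..<length As]"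
  proof (rule map_cong)
    fix j assume "j \<in> set [0..<length As]"
    hence j: "j < length As" by simp
    have "As ! j \<in> Ob X" using As j nth_mem by blast
    thus "Cmp X (Prd X As) (Prd X As) (As ! j) (Proj X As j) (Idm X (Prd X As)) = Proj X As j"
      using idr[OF prd_ob[OF As] _ proj_hom[OF As j]] by simp
  qed simp
  ultimately show ?thesis by simp
qed

lemma L_omega: "set As \<subseteq> Ob X \<Longrightarrow> omega X K kleisli_L_ob (kleisli_L X So eta) As = eta (Prd X As)"
proof -
  assume As: "set As \<subseteq> Ob X"
  have P: "Prd X As \<in> Ob X" using prd_ob[OF As] .
  have "omega X K kleisli_L_ob (kleisli_L X So eta) As = Cmp X (Prd X As) (Prd X (map So As)) (So (Prd X As)) (omega_inv X X So Sm As)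
     (Tup X (Prd X As) (map So As) (map (\<lambda>j. Cmp X (Prd X As) (As ! j) (So (As ! j)) (eta (As ! j)) (Proj X As j)) [0..<length As]))"
    unfolding omega_def K_sel Lob kleisli_L_def by simp
  also have "\<dots> = Cmp X (Prd X As) (Prd X As) (So (Prd X As)) (eta (Prd X As)) (Tup X (Prd X As) As (map (Proj X As) [0..<length As]))"
    by (rule tupK_L[OF As P]) (use As proj_hom[OF As] in auto)
  also have "\<dots> = eta (Prd X As)" using tup_projs[OF As] idr[OF P s_ob[OF P] eta_hom[OF P]] by simp
  finally show ?thesis .
qed

lemma L_functor: "is_functor X K kleisli_L_ob (kleisli_L X So eta)"
  unfolding is_functor_def K_sel Lob kleisli_L_def
proof (intro conjI ballI allI impI)
  fix A assume A: "A \<in> Ob X"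
  show "A \<in> Ob X" by fact
  show "Cmp X A A (So A) (eta A) (Idm X A) = eta A" using idr[OF A s_ob[OF A] eta_hom[OF A]] .
next
  fix A B f assume A: "A \<in> Ob X" and B: "B \<in> Ob X" and f: "f \<in> Hom X A B"
  show "Cmp X A B (So B) (eta B) f \<in> Hom X A (So B)" using cmp_hom[OF A B s_ob[OF B] f eta_hom[OF B]] .
next
  fix A B C f g assume A: "A \<in> Ob X" and B: "B \<in> Ob X" and C: "C \<in> Ob X" and f: "f \<in> Hom X A B" and g: "g \<in> Hom X B C"
  show "Cmp X A C (So C) (eta C) (Cmp X A B C g f) = Cmp X A (So B) (So C) (bind B C (Cmp X B C (So C) (eta C) g)) (Cmp X A B (So B) (eta B) f)"
    using cmpK_L[OF A B C cmp_hom[OF B C s_ob[OF C] g eta_hom[OF C]] f] assoc[OF A B C s_ob[OF C] f g eta_hom[OF C]] by simp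
qed

lemma part3L: "is_strict_cart_kdiff_functor X K kleisli_L_ob (kleisli_L X So eta)"
  unfolding is_strict_cart_kdiff_functor_def is_strict_cart_klinear_functor_def is_strong_cart_klinear_functor_def
proof (intro conjI allI impI ballI L_functor)
  fix As assume As: "set As \<subseteq> Ob X"
  have P: "Prd X As \<in> Ob X" using prd_ob[OF As] .
  show "is_iso K (kleisli_L_ob (Prd X As)) (Prd K (map kleisli_L_ob As)) (omega X K kleisli_L_ob (kleisli_L X So eta) As)"
    unfolding L_omega[OF As] unfolding is_iso_def K_sel Lob
    using eta_hom[OF P] bind_eta[OF P P eta_hom[OF P]] by auto
  show "kleisli_L_ob (Prd X As) = Prd K (map kleisli_L_ob As)" unfolding K_sel Lob by simp
  show "omega X K kleisli_L_ob (kleisli_L X So eta) As = Idm K (kleisli_L_ob (Prd X As))"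
    unfolding L_omega[OF As] unfolding K_sel Lob ..
next
  fix A B f g r s assume A: "A \<in> Ob X" and B: "B \<in> Ob X" and f: "f \<in> Hom X A B" and g: "g \<in> Hom X A B"
  show "kleisli_L X So eta A B (Add X (Smul X r f) (Smul X s g)) = Add K (Smul K r (kleisli_L X So eta A B f)) (Smul K s (kleisli_L X So eta A B g))"
    unfolding K_sel kleisli_L_def using eta_lin[OF B A f g] .
next
  fix A B f assume A: "A \<in> Ob X" and B: "B \<in> Ob X" and f: "f \<in> Hom X A B"
  show "Dif K (kleisli_L_ob A) (kleisli_L_ob B) (kleisli_L X So eta A B f) = kleisli_L X So eta (Prd X [A, A]) B (Dif X A B f)"
    unfolding K_sel Lob kleisli_L_def by (rule dlin_comp[OF A B s_ob[OF B] f eta_hom[OF B] eta_dlin[OF B]])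
qed

lemma R_omega: "set As \<subseteq> Ob X \<Longrightarrow> omega K X So (kleisli_R X So Sm mu) As = omega X X So Sm As"
  unfolding omega_def K_sel kleisli_R_def
  by (intro arg_cong[where f="Tup X (So (Prd X As)) (map So As)"] map_cong refl)
     (auto intro!: bind_L proj_hom prd_ob)

lemma part3R: "is_strong_cart_kdiff_functor K X So (kleisli_R X So Sm mu)"
  unfolding is_strong_cart_kdiff_functor_def is_strong_cart_klinear_functor_def
proof (intro conjI allI impI ballI)
  show "is_functor K X So (kleisli_R X So Sm mu)"
    unfolding is_functor_def K_sel kleisli_R_def
  proof (intro conjI allI impI ballI)
    fix A assume A: "A \<in> Ob X"
    show "So A \<in> Ob X" using s_ob[OF A] .
    show "bind A A (eta A) = Idm X (So A)" using mu_seta[OF A] .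
  next
    fix A B f assume A: "A \<in> Ob X" and B: "B \<in> Ob X" and f: "f \<in> Hom X A (So B)"
    show "bind A B f \<in> Hom X (So A) (So B)" using bind_hom[OF A B f] .
  next
    fix A B C f g assume A: "A \<in> Ob X" and B: "B \<in> Ob X" and C: "C \<in> Ob X" and f: "f \<in> Hom X A (So B)" and g: "g \<in> Hom X B (So C)"
    show "bind A C (Cmp X A (So B) (So C) (bind B C g) f) = Cmp X (So A) (So B) (So C) (bind B C g) (bind A B f)"
      using bind_bind[OF A B C f g] by simp
  qed
next
  fix As assume As: "set As \<subseteq> Ob K"
  hence As': "set As \<subseteq> Ob X" unfolding K_sel .
  show "is_iso X (So (Prd K As)) (Prd X (map So As)) (omega K X So (kleisli_R X So Sm mu) As)"
    unfolding R_omega[OF As'] K_sel using om_iso[OF As'] .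
next
  fix A B f g r s assume A: "A \<in> Ob K" and B: "B \<in> Ob K" and f: "f \<in> Hom K A B" and g: "g \<in> Hom K A B"
  show "kleisli_R X So Sm mu A B (Add K (Smul K r f) (Smul K s g)) = Add X (Smul X r (kleisli_R X So Sm mu A B f)) (Smul X s (kleisli_R X So Sm mu A B g))"
    using A B f g unfolding K_sel kleisli_R_def using bind_lin by simp
next
  fix A B f assume A: "A \<in> Ob K" and B: "B \<in> Ob K" and f: "f \<in> Hom K A B"
  have A': "A \<in> Ob X" and B': "B \<in> Ob X" and f': "f \<in> Hom X A (So B)" using A B f unfolding K_sel by auto
  have oi: "omega_inv K X So (kleisli_R X So Sm mu) [A, A] = omega_inv X X So Sm [A, A]"
    unfolding omega_inv_def R_omega[of "[A,A]", OF _] using A' K_sel by (simp add: R_omega)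
  have SA: "So A \<in> Ob X" and SB: "So B \<in> Ob X" and SSB: "So (So B) \<in> Ob X" using s_ob A' B' by auto
  have PA: "Prd X [A, A] \<in> Ob X" using ob2[OF A' A'] .
  have Q: "Prd X [So A, So A] \<in> Ob X" using ob2[OF SA SA] .
  have Sf: "Sm A (So B) f \<in> Hom X (So A) (So (So B))" using sm_hom[OF A' SB f'] .
  have Df: "Dif X A (So B) f \<in> Hom X (Prd X [A, A]) (So B)" using dif_hom[OF A' SB f'] .
  have omi: "omega_inv X X So Sm [A, A] \<in> Hom X (Prd X [So A, So A]) (So (Prd X [A, A]))" using om_props(2)[of "[A,A]"] A' by simp
  have "Dif X (So A) (So B) (bind A B f) = Cmp X (Prd X [So A, So A]) (So (So B)) (So B) (mu B) (Dif X (So A) (So (So B)) (Sm A (So B) f))"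
    by (rule dlin_comp[OF SA SSB SB Sf mu_hom[OF B'] mu_dlin[OF B']])
  also have "\<dots> = Cmp X (Prd X [So A, So A]) (So (So B)) (So B) (mu B) (Cmp X (Prd X [So A, So A]) (So (Prd X [A, A])) (So (So B)) (Sm (Prd X [A, A]) (So B) (Dif X A (So B) f)) (omega_inv X X So Sm [A, A]))"
    using sm_dif[OF A' SB f'] by simp
  also have "\<dots> = Cmp X (Prd X [So A, So A]) (So (Prd X [A, A])) (So B) (bind (Prd X [A, A]) B (Dif X A (So B) f)) (omega_inv X X So Sm [A, A])"
    by (rule assoc[OF Q s_ob[OF PA] SSB SB omi sm_hom[OF PA SB Df] mu_hom[OF B']])
  finally show "Dif X (So A) (So B) (kleisli_R X So Sm mu A B f) =
        Cmp X (Prd X [So A, So A]) (So (Prd K [A, A])) (So B) (kleisli_R X So Sm mu (Prd K [A, A]) B (Dif K A B f))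
         (omega_inv K X So (kleisli_R X So Sm mu) [A, A])"
    unfolding oi K_sel kleisli_R_def by simp
qed

theorem main: "is_cartesian_kdiff K
    \<and> (\<forall>A\<in>Ob X. \<forall>B\<in>Ob X. \<forall>f. f \<in> Hom K A B \<longrightarrow>
         (is_D_linear K A B f \<longleftrightarrow> is_D_linear X A (So B) f))
    \<and> is_strict_cart_kdiff_functor X K kleisli_L_ob (kleisli_L X So eta)
    \<and> is_strong_cart_kdiff_functor K X So (kleisli_R X So Sm mu)"
  using K_cd part2 part3L part3R by blast

end

theorem mainTheorem3:
  fixes X :: "('o, 'm, 'k::comm_semiring_1) cdstr"
    and So :: "'o \<Rightarrow> 'o" and Sm :: "'o \<Rightarrow> 'o \<Rightarrow> 'm \<Rightarrow> 'm"
    and mu eta :: "'o \<Rightarrow> 'm"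
  assumes "is_cartesian_kdiff X"
    and "is_cart_kdiff_monad X So Sm mu eta"
  shows "is_cartesian_kdiff (kleisli X So Sm mu eta)
    \<and> (\<forall>A\<in>Ob X. \<forall>B\<in>Ob X. \<forall>f. f \<in> Hom (kleisli X So Sm mu eta) A B \<longrightarrow>
         (is_D_linear (kleisli X So Sm mu eta) A B f \<longleftrightarrow> is_D_linear X A (So B) f))
    \<and> is_strict_cart_kdiff_functor X (kleisli X So Sm mu eta) kleisli_L_ob (kleisli_L X So eta)
    \<and> is_strong_cart_kdiff_functor (kleisli X So Sm mu eta) X So (kleisli_R X So Sm mu)"
  using kdm.main[OF kdm.intro[OF assms]] .

end
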